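(* Let $l\in\mathbb{N}$ and for each $i\in\{1,\dots,l\}$ let $S_i$ be a countable adequate commutative partial semigroup and let $\langle y_{i,n}\rangle_{n=1}^{\infty}$ be an adequate sequence in $S_i$. Let $C$ be an $IP^{\star}$ set in $T=S_1\times\cdots\times S_l$ and let $m\in\mathbb{N}$. Then for each $i\in\{1,\dots,l\}$ there is a weak product subsystem $\langle x_{i,n}\rangle_{n=1}^{m}$ of $\langle y_{i,n}\rangle_{n=1}^{\infty}$ such that \[ FS(\langle x_{1,n}\rangle_{n=1}^{m})\times\cdots\times FS(\langle x_{l,n}\rangle_{n=1}^{m})\subseteq C . \]
   Context: A partial semigroup $(S,+)$ is a set with a map $+$ from a subset of $S\times S$ to $S$ such that $(a+b)+c=a+(b+c)$ whenever either side is defined (then both are defined and equal); it is commutative if $a+b$ is defined iff $b+a$ is, and then they are equal. For $s\in S$, $\varphi(s)=\{t: s+t\text{ defined}\}$; for finite nonempty $H\subseteq S$, $\sigma(H)=\bigcap_{s\in H}\varphi(s)$; $S$ is adequate if all $\sigma(H)\ne\emptyset$. On $T=S_1\times\cdots\times S_l$, $\bar a+\bar b$ is defined iff $a_i+b_i$ is defined for every $i$, and then equals $(a_1+b_1,\dots,a_l+b_l)$. For a partial semigroup $S$: $\beta S$ is the space of ultrafilters on $S$; $\delta S=\{p\in\beta S:\varphi(x)\in p \text{ for all } x\in S\}$; for $p,q\in\delta S$, $A\in p+q$ iff $\{x\in S: -x+A\in q\}\in p$, where $-x+A=\{y\in\varphi(x): x+y\in A\}$; this makes $\delta S$ a semigroup.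 A set $C\subseteq S$ is $IP^{\star}$ if $C\in p$ for every idempotent $p=p+p$ in $\delta S$. A sequence $\langle y_n\rangle_{n=1}^\infty$ is adequate if all finite sums $\sum_{n\in F}y_n$ are defined and for every finite nonempty $H\subseteq S$ there is $m$ with all sums $\sum_{n\in F}y_n$, $F\subseteq\{m,m+1,\dots\}$ finite nonempty, lying in $\sigma(H)$. $\langle x_n\rangle_{n=1}^{m}$ is a weak product subsystem of $\langle y_n\rangle_{n=1}^{\infty}$ if there are pairwise disjoint finite nonempty $H_1,\dots,H_m\subseteq\mathbb{N}$ with $x_n=\sum_{t\in H_n}y_t$ for each $n$. $FS(\langle x_n\rangle_{n=1}^{m})=\{\sum_{n\in F}x_n: \emptyset\ne F\subseteq\{1,\dots,m\}\}$. *)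

theory Defs
  imports Main "HOL-Library.FuncSet" "HOL-Library.Countable_Set"
begin

definition partial_semigroup :: "'a set \<Rightarrow> ('a \<Rightarrow> 'a \<Rightarrow> 'a option) \<Rightarrow> bool" where
  "partial_semigroup S add \<longleftrightarrow>
     (\<forall>a\<in>S. \<forall>b\<in>S. \<forall>c. add a b = Some c \<longrightarrow> c \<in> S) \<and>
     (\<forall>a\<in>S. \<forall>b\<in>S. \<forall>c\<in>S.
        Option.bind (add a b) (\<lambda>d. add d c) = Option.bind (add b c) (\<lambda>e. add a e))"

definition comm_partial_semigroup :: "'a set \<Rightarrow> ('a \<Rightarrow> 'a \<Rightarrow> 'a option) \<Rightarrow> bool" where
  "comm_partial_semigroup S add \<longleftrightarrow>
     partial_semigroup S add \<and> (\<forall>a\<in>S. \<forall>b\<in>S. add a b = add b a)"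

definition phi :: "'a set \<Rightarrow> ('a \<Rightarrow> 'a \<Rightarrow> 'a option) \<Rightarrow> 'a \<Rightarrow> 'a set" where
  "phi S add s = {t \<in> S. add s t \<noteq> None}"

definition sigma :: "'a set \<Rightarrow> ('a \<Rightarrow> 'a \<Rightarrow> 'a option) \<Rightarrow> 'a set \<Rightarrow> 'a set" where
  "sigma S add H = (\<Inter>s\<in>H. phi S add s)"

definition adequate :: "'a set \<Rightarrow> ('a \<Rightarrow> 'a \<Rightarrow> 'a option) \<Rightarrow> bool" where
  "adequate S add \<longleftrightarrow>
     (\<forall>H. finite H \<and> H \<noteq> {} \<and> H \<subseteq> S \<longrightarrow> sigma S add H \<noteq> {})"

definition prod_carrier :: "'i set \<Rightarrow> ('i \<Rightarrow> 'a set) \<Rightarrow> ('i \<Rightarrow> 'a) set" where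
  "prod_carrier I S = PiE I S"

definition prod_add :: "'i set \<Rightarrow> ('i \<Rightarrow> 'a \<Rightarrow> 'a \<Rightarrow> 'a option)
                        \<Rightarrow> ('i \<Rightarrow> 'a) \<Rightarrow> ('i \<Rightarrow> 'a) \<Rightarrow> ('i \<Rightarrow> 'a) option" where
  "prod_add I add x y =
     (if \<forall>i\<in>I. add i (x i) (y i) \<noteq> None
      then Some (\<lambda>i. if i \<in> I then the (add i (x i) (y i)) else undefined)
      else None)"

definition ultrafilter_on :: "'a set \<Rightarrow> 'a set set \<Rightarrow> bool" where
  "ultrafilter_on S p \<longleftrightarrow>
     p \<subseteq> Pow S \<and> S \<in> p \<and> {} \<notin> p \<and>
     (\<forall>A\<in>p. \<forall>B\<in>p. A \<inter> B \<in> p) \<and>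
     (\<forall>A\<in>p. \<forall>B. A \<subseteq> B \<and> B \<subseteq> S \<longrightarrow> B \<in> p) \<and>
     (\<forall>A. A \<subseteq> S \<longrightarrow> A \<in> p \<or> S - A \<in> p)"

definition deltaS :: "'a set \<Rightarrow> ('a \<Rightarrow> 'a \<Rightarrow> 'a option) \<Rightarrow> 'a set set set" where
  "deltaS S add = {p. ultrafilter_on S p \<and> (\<forall>x\<in>S. phi S add x \<in> p)}"

definition minus_shift :: "'a set \<Rightarrow> ('a \<Rightarrow> 'a \<Rightarrow> 'a option) \<Rightarrow> 'a \<Rightarrow> 'a set \<Rightarrow> 'a set" where
  "minus_shift S add x A = {y \<in> phi S add x. \<exists>z\<in>A. add x y = Some z}"

definition uf_plus :: "'a set \<Rightarrow> ('a \<Rightarrow> 'a \<Rightarrow> 'a option) \<Rightarrow> 'a set set \<Rightarrow> 'a set set \<Rightarrow> 'a set set" where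
  "uf_plus S add p q = {A. A \<subseteq> S \<and> {x \<in> S. minus_shift S add x A \<in> q} \<in> p}"

definition IP_star :: "'a set \<Rightarrow> ('a \<Rightarrow> 'a \<Rightarrow> 'a option) \<Rightarrow> 'a set \<Rightarrow> bool" where
  "IP_star S add C \<longleftrightarrow> C \<subseteq> S \<and>
     (\<forall>p\<in>deltaS S add. uf_plus S add p p = p \<longrightarrow> C \<in> p)"

text \<open>Finite sums \<open>\<Sum>n\<in>F. y n\<close> of a sequence, summed in increasing order of indices
  (None if undefined or F empty/infinite).\<close>

fun psum_list :: "('a \<Rightarrow> 'a \<Rightarrow> 'a option) \<Rightarrow> (nat \<Rightarrow> 'a) \<Rightarrow> nat list \<Rightarrow> 'a option" where
  "psum_list add y [] = None"
| "psum_list add y [n] = Some (y n)"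
| "psum_list add y (n # ns) = Option.bind (psum_list add y ns) (\<lambda>s. add (y n) s)"

definition psum :: "('a \<Rightarrow> 'a \<Rightarrow> 'a option) \<Rightarrow> (nat \<Rightarrow> 'a) \<Rightarrow> nat set \<Rightarrow> 'a option" where
  "psum add y F = (if finite F then psum_list add y (sorted_list_of_set F) else None)"

definition adequate_seq :: "'a set \<Rightarrow> ('a \<Rightarrow> 'a \<Rightarrow> 'a option) \<Rightarrow> (nat \<Rightarrow> 'a) \<Rightarrow> bool" where
  "adequate_seq S add y \<longleftrightarrow>
     (\<forall>n. y n \<in> S) \<and>
     (\<forall>F. finite F \<and> F \<noteq> {} \<longrightarrow> psum add y F \<noteq> None) \<and>
     (\<forall>H. finite H \<and> H \<noteq> {} \<and> H \<subseteq> S \<longrightarrow>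
        (\<exists>m. \<forall>F. finite F \<and> F \<noteq> {} \<and> F \<subseteq> {m..} \<longrightarrow>
              (\<exists>z. psum add y F = Some z \<and> z \<in> sigma S add H)))"

definition weak_product_subsystem ::
  "('a \<Rightarrow> 'a \<Rightarrow> 'a option) \<Rightarrow> (nat \<Rightarrow> 'a) \<Rightarrow> nat \<Rightarrow> (nat \<Rightarrow> 'a) \<Rightarrow> bool" where
  "weak_product_subsystem add y m x \<longleftrightarrow>
     (\<exists>H :: nat \<Rightarrow> nat set.
        (\<forall>n<m. finite (H n) \<and> H n \<noteq> {} \<and> psum add y (H n) = Some (x n)) \<and>
        (\<forall>n<m. \<forall>n'<m. n \<noteq> n' \<longrightarrow> H n \<inter> H n' = {}))"

definition FS :: "('a \<Rightarrow> 'a \<Rightarrow> 'a option) \<Rightarrow> (nat \<Rightarrow> 'a) \<Rightarrow> nat \<Rightarrow> 'a set" where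
  "FS add x m = {z. \<exists>F. F \<noteq> {} \<and> F \<subseteq> {..<m} \<and> psum add x F = Some z}"

end

theory Submission
  imports Defs
begin


definition comb :: "('a \<Rightarrow> 'a \<Rightarrow> 'a option) \<Rightarrow> 'a option \<Rightarrow> 'a option \<Rightarrow> 'a option" where
  "comb add X Y = Option.bind X (\<lambda>a. Option.bind Y (\<lambda>b. add a b))"

lemma psum_list_in_S:
  assumes "partial_semigroup S add" "\<forall>n. y n \<in> S" "psum_list add y xs = Some z"
  shows "z \<in> S"
  using assms(3)
proof (induction xs arbitrary: z)
  case Nil
  then show ?case by simp
next
  case (Cons a xs)
  show ?case
  proof (cases xs)
    case Nil
    then show ?thesis using Cons.prems assms(2) by auto
  next
    case (Cons b ys)
    then obtain s where s: "psum_list add y xs = Some s" "add (y a) s = Some z"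
      using Cons.prems by (cases "psum_list add y xs") auto
    then have "s \<in> S" using Cons.IH by blast
    then show ?thesis using s assms(1,2) unfolding partial_semigroup_def by blast
  qed
qed

lemma psum_in_S:
  assumes "partial_semigroup S add" "\<forall>n. y n \<in> S" "psum add y F = Some z"
  shows "z \<in> S"
  using assms psum_list_in_S unfolding psum_def by (metis option.distinct(1))

lemma comb_assoc:
  assumes ps: "partial_semigroup S add"
    and X: "\<forall>z. X = Some z \<longrightarrow> z \<in> S" and Y: "\<forall>z. Y = Some z \<longrightarrow> z \<in> S"
    and Z: "\<forall>z. Z = Some z \<longrightarrow> z \<in> S"
  shows "comb add (comb add X Y) Z = comb add X (comb add Y Z)"
proof (cases X)
  case None then show ?thesis by (simp add: comb_def)
next
  case (Some x)
  show ?thesis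
  proof (cases Y)
    case None then show ?thesis using Some by (simp add: comb_def)
  next
    case (Some y')
    show ?thesis
    proof (cases Z)
      case None then show ?thesis using \<open>X = Some x\<close> Some
        by (cases "add x y'") (simp_all add: comb_def)
    next
      case (Some z)
      have "x \<in> S" "y' \<in> S" "z \<in> S" using X Y Z \<open>X = Some x\<close> \<open>Y = Some y'\<close> Some by auto
      then have "Option.bind (add x y') (\<lambda>d. add d z) = Option.bind (add y' z) (\<lambda>e. add x e)"
        using ps unfolding partial_semigroup_def by blast
      then show ?thesis using \<open>X = Some x\<close> \<open>Y = Some y'\<close> Some by (simp add: comb_def)
    qed
  qed
qed

lemma comb_comm:
  assumes cs: "comm_partial_semigroup S add"
    and X: "\<forall>z. X = Some z \<longrightarrow> z \<in> S" and Y: "\<forall>z. Y = Some z \<longrightarrow> z \<in> S"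
  shows "comb add X Y = comb add Y X"
proof (cases X)
  case None then show ?thesis by (cases Y) (simp_all add: comb_def)
next
  case (Some a)
  show ?thesis
  proof (cases Y)
    case None then show ?thesis using Some by (simp add: comb_def)
  next
    case (Some b)
    have "a \<in> S" "b \<in> S" using X Y \<open>X = Some a\<close> Some by auto
    then have "add a b = add b a" using cs unfolding comm_partial_semigroup_def by blast
    then show ?thesis using \<open>X = Some a\<close> Some by (simp add: comb_def)
  qed
qed

lemma comb_in_S:
  assumes "partial_semigroup S add"
    and X: "\<forall>z. X = Some z \<longrightarrow> z \<in> S" and Y: "\<forall>z. Y = Some z \<longrightarrow> z \<in> S"
  shows "\<forall>z. comb add X Y = Some z \<longrightarrow> z \<in> S"
proof (intro allI impI)
  fix z assume h: "comb add X Y = Some z"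
  then obtain a b where ab: "X = Some a" "Y = Some b" "add a b = Some z"
    by (cases X; cases Y) (auto simp: comb_def)
  then have "a \<in> S" "b \<in> S" using X Y by auto
  then show "z \<in> S" using ab assms(1) unfolding partial_semigroup_def by blast
qed

lemma psum_list_cons:
  "xs \<noteq> [] \<Longrightarrow> psum_list add y (a # xs) = comb add (Some (y a)) (psum_list add y xs)"
  by (cases xs) (auto simp: comb_def)

lemma psum_list_insort:
  assumes cs: "comm_partial_semigroup S add" and yS: "\<forall>n. y n \<in> S" and ne: "xs \<noteq> []"
  shows "psum_list add y (insort a xs) = comb add (Some (y a)) (psum_list add y xs)"
  using ne
proof (induction xs)
  case Nil then show ?case by simp
next
  case (Cons b xs)
  have ps: "partial_semigroup S add" using cs unfolding comm_partial_semigroup_def by simp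
  have inS: "\<forall>z. psum_list add y zs = Some z \<longrightarrow> z \<in> S" for zs
    using psum_list_in_S[OF ps yS] by blast
  show ?case
  proof (cases "a \<le> b")
    case True
    then show ?thesis by (simp add: comb_def)
  next
    case False
    show ?thesis
    proof (cases "xs = []")
      case True
      then show ?thesis using False comb_comm[OF cs, of "Some (y a)" "Some (y b)"] yS
        by (simp add: comb_def)
    next
      case xne: False
      have "psum_list add y (insort a (b # xs)) = psum_list add y (b # insort a xs)"
        using False by simp
      also have "\<dots> = comb add (Some (y b)) (psum_list add y (insort a xs))"
        by (rule psum_list_cons) (cases xs, auto)
      also have "\<dots> = comb add (Some (y b)) (comb add (Some (y a)) (psum_list add y xs))"
        using Cons xne by simp
      also have "\<dots> = comb add (comb add (Some (y b)) (Some (y a))) (psum_list add y xs)"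
        using comb_assoc[OF ps] yS inS by simp
      also have "\<dots> = comb add (comb add (Some (y a)) (Some (y b))) (psum_list add y xs)"
        using comb_comm[OF cs, of "Some (y a)" "Some (y b)"] yS by simp
      also have "\<dots> = comb add (Some (y a)) (comb add (Some (y b)) (psum_list add y xs))"
        using comb_assoc[OF ps] yS inS by simp
      also have "\<dots> = comb add (Some (y a)) (psum_list add y (b # xs))"
        by (simp add: psum_list_cons[OF xne])
      finally show ?thesis .
    qed
  qed
qed

lemma psum_insert:
  assumes cs: "comm_partial_semigroup S add" and yS: "\<forall>n. y n \<in> S"
    and A: "finite A" "A \<noteq> {}" "a \<notin> A"
  shows "psum add y (insert a A) = comb add (Some (y a)) (psum add y A)"
proof -
  have "sorted_list_of_set (insert a A) = insort a (sorted_list_of_set A)"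
    using A by (simp add: sorted_list_of_set_insert)
  moreover have "sorted_list_of_set A \<noteq> []" using A by simp
  ultimately show ?thesis using A psum_list_insort[OF cs yS] by (simp add: psum_def)
qed

lemma psum_singleton: "psum add y {a} = Some (y a)"
  by (simp add: psum_def)

lemma psum_union:
  assumes cs: "comm_partial_semigroup S add" and yS: "\<forall>n. y n \<in> S"
    and A: "finite A" "A \<noteq> {}" and B: "finite B" "B \<noteq> {}" and dis: "A \<inter> B = {}"
  shows "psum add y (A \<union> B) = comb add (psum add y A) (psum add y B)"
  using A dis
proof (induction A rule: finite_ne_induct)
  case (singleton x)
  then show ?case using psum_insert[OF cs yS B, of x] by (simp add: psum_singleton)
next
  case (insert x F)
  have ps: "partial_semigroup S add" using cs unfolding comm_partial_semigroup_def by simp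
  have inS: "\<forall>z. psum add y Z = Some z \<longrightarrow> z \<in> S" for Z
    using psum_in_S[OF ps yS] by blast
  have "psum add y (insert x F \<union> B) = psum add y (insert x (F \<union> B))" by simp
  also have "\<dots> = comb add (Some (y x)) (psum add y (F \<union> B))"
    using psum_insert[OF cs yS] insert B by auto
  also have "\<dots> = comb add (Some (y x)) (comb add (psum add y F) (psum add y B))"
    using insert by auto
  also have "\<dots> = comb add (comb add (Some (y x)) (psum add y F)) (psum add y B)"
    using comb_assoc[OF ps] yS inS by simp
  also have "\<dots> = comb add (psum add y (insert x F)) (psum add y B)"
    using psum_insert[OF cs yS] insert by auto
  finally show ?case .
qed



definition filter_on :: "'a set \<Rightarrow> 'a set set \<Rightarrow> bool" where
  "filter_on S F \<longleftrightarrow> F \<subseteq> Pow S \<and> S \<in> F \<and> {} \<notin> F \<and>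
     (\<forall>A\<in>F. \<forall>B\<in>F. A \<inter> B \<in> F) \<and> (\<forall>A\<in>F. \<forall>B. A \<subseteq> B \<and> B \<subseteq> S \<longrightarrow> B \<in> F)"

lemma filter_onD:
  assumes "filter_on S F"
  shows "F \<subseteq> Pow S" "S \<in> F" "{} \<notin> F" "\<And>A B. A \<in> F \<Longrightarrow> B \<in> F \<Longrightarrow> A \<inter> B \<in> F"
    "\<And>A B. A \<in> F \<Longrightarrow> A \<subseteq> B \<Longrightarrow> B \<subseteq> S \<Longrightarrow> B \<in> F"
  using assms unfolding filter_on_def by blast+

lemma filter_onI:
  assumes "F \<subseteq> Pow S" "S \<in> F" "{} \<notin> F" "\<And>A B. A \<in> F \<Longrightarrow> B \<in> F \<Longrightarrow> A \<inter> B \<in> F"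
    "\<And>A B. A \<in> F \<Longrightarrow> A \<subseteq> B \<Longrightarrow> B \<subseteq> S \<Longrightarrow> B \<in> F"
  shows "filter_on S F"
  unfolding filter_on_def using assms by blast

lemma ultrafilter_exists:
  assumes "filter_on S F"
  shows "\<exists>U. ultrafilter_on S U \<and> F \<subseteq> U"
proof -
  define \<A> where "\<A> = {G. filter_on S G \<and> F \<subseteq> G}"
  have ne: "\<A> \<noteq> {}" using assms unfolding \<A>_def by blast
  have ch: "\<Union>\<C> \<in> \<A>" if cne: "\<C> \<noteq> {}" and cch: "subset.chain \<A> \<C>" for \<C>
  proof -
    have sub: "\<C> \<subseteq> \<A>" and lin: "\<And>x y. x \<in> \<C> \<Longrightarrow> y \<in> \<C> \<Longrightarrow> x \<subseteq> y \<or> y \<subseteq> x"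
      using cch unfolding subset.chain_def by auto
    obtain G0 where G0: "G0 \<in> \<C>" using cne by blast
    have fG: "filter_on S G" "F \<subseteq> G" if "G \<in> \<C>" for G using sub that unfolding \<A>_def by blast+
    have "filter_on S (\<Union>\<C>)"
    proof (rule filter_onI)
      show "\<Union>\<C> \<subseteq> Pow S" using filter_onD(1)[OF fG(1)] by blast
      show "S \<in> \<Union>\<C>" using filter_onD(2)[OF fG(1)[OF G0]] G0 by blast
      show "{} \<notin> \<Union>\<C>" using filter_onD(3)[OF fG(1)] by blast
    next
      fix A B assume "A \<in> \<Union>\<C>" "B \<in> \<Union>\<C>"
      then obtain GA GB where g: "GA \<in> \<C>" "GB \<in> \<C>" "A \<in> GA" "B \<in> GB" by blast
      show "A \<inter> B \<in> \<Union>\<C>"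
      proof (cases "GA \<subseteq> GB")
        case True
        then have "A \<inter> B \<in> GB" using filter_onD(4)[OF fG(1)[OF g(2)]] g by blast
        then show ?thesis using g(2) by blast
      next
        case False
        then have "GB \<subseteq> GA" using lin[OF g(1,2)] by blast
        then have "A \<inter> B \<in> GA" using filter_onD(4)[OF fG(1)[OF g(1)]] g by blast
        then show ?thesis using g(1) by blast
      qed
    next
      fix A B assume "A \<in> \<Union>\<C>" "A \<subseteq> B" "B \<subseteq> S"
      then obtain GA where "GA \<in> \<C>" "A \<in> GA" by blast
      then have "B \<in> GA" using filter_onD(5)[OF fG(1)] \<open>A \<subseteq> B\<close> \<open>B \<subseteq> S\<close> by blast
      then show "B \<in> \<Union>\<C>" using \<open>GA \<in> \<C>\<close> by blast
    qed
    moreover have "F \<subseteq> \<Union>\<C>" using fG(2)[OF G0] G0 by blast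
    ultimately show ?thesis unfolding \<A>_def by blast
  qed
  obtain M where M: "M \<in> \<A>" and max: "\<And>X. X \<in> \<A> \<Longrightarrow> M \<subseteq> X \<Longrightarrow> X = M"
    using subset_Zorn_nonempty[OF ne ch] by blast
  have fM: "filter_on S M" "F \<subseteq> M" using M unfolding \<A>_def by auto
  note fPow = filter_onD(1)[OF fM(1)] and fS = filter_onD(2)[OF fM(1)]
    and fE = filter_onD(3)[OF fM(1)] and fI = filter_onD(4)[OF fM(1)]
    and fU = filter_onD(5)[OF fM(1)]
  have ultra: "A \<in> M \<or> S - A \<in> M" if AS: "A \<subseteq> S" for A
  proof (rule ccontr)
    assume "\<not> (A \<in> M \<or> S - A \<in> M)"
    then have nA: "A \<notin> M" and nC: "S - A \<notin> M" by auto
    define M' where "M' = {B. B \<subseteq> S \<and> (\<exists>C\<in>M. C \<inter> A \<subseteq> B)}"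
    have M'I: "B \<in> M'" if "B \<subseteq> S" "C \<in> M" "C \<inter> A \<subseteq> B" for B C
      unfolding M'_def using that by blast
    have "filter_on S M'"
    proof (rule filter_onI)
      show "M' \<subseteq> Pow S" unfolding M'_def by blast
      show "S \<in> M'" by (rule M'I[OF _ fS]) auto
      show "{} \<notin> M'"
      proof
        assume "{} \<in> M'"
        then obtain C where C: "C \<in> M" "C \<inter> A \<subseteq> {}" unfolding M'_def by blast
        have "C \<subseteq> S" using fPow C(1) by blast
        then have "C \<subseteq> S - A" using C(2) by blast
        then have "S - A \<in> M" using fU[OF C(1)] by blast
        then show False using nC by blast
      qed
    next
      fix B1 B2 assume "B1 \<in> M'" "B2 \<in> M'"
      then obtain C1 C2 where c: "C1 \<in> M" "C2 \<in> M" "C1 \<inter> A \<subseteq> B1" "C2 \<inter> A \<subseteq> B2" "B1 \<subseteq> S" "B2 \<subseteq> S"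
        unfolding M'_def by blast
      show "B1 \<inter> B2 \<in> M'" by (rule M'I[OF _ fI[OF c(1,2)]]) (use c in blast)+
    next
      fix B1 B2 assume "B1 \<in> M'" "B1 \<subseteq> B2" "B2 \<subseteq> S"
      then show "B2 \<in> M'" unfolding M'_def by blast
    qed
    moreover have "M \<subseteq> M'"
    proof
      fix B assume B: "B \<in> M"
      show "B \<in> M'" by (rule M'I[OF _ B]) (use B fPow in blast)+
    qed
    ultimately have "M' \<in> \<A>" using fM(2) unfolding \<A>_def by blast
    then have "M' = M" using max \<open>M \<subseteq> M'\<close> by blast
    moreover have "A \<in> M'" by (rule M'I[OF AS fS]) blast
    ultimately show False using nA by blast
  qed
  have "ultrafilter_on S M"
    unfolding ultrafilter_on_def
  proof (intro conjI ballI allI impI)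
    show "M \<subseteq> Pow S" "S \<in> M" "{} \<notin> M" using fPow fS fE by auto
  next
    fix A B assume "A \<in> M" "B \<in> M" then show "A \<inter> B \<in> M" by (rule fI)
  next
    fix A B assume "A \<in> M" "A \<subseteq> B \<and> B \<subseteq> S" then show "B \<in> M" using fU by blast
  next
    fix A assume "A \<subseteq> S" then show "A \<in> M \<or> S - A \<in> M" by (rule ultra)
  qed
  then show ?thesis using fM(2) by blast
qed

lemma uf_sub: "ultrafilter_on S p \<Longrightarrow> A \<in> p \<Longrightarrow> A \<subseteq> S"
  unfolding ultrafilter_on_def by blast

lemma uf_S: "ultrafilter_on S p \<Longrightarrow> S \<in> p"
  unfolding ultrafilter_on_def by blast

lemma uf_int: "ultrafilter_on S p \<Longrightarrow> A \<in> p \<Longrightarrow> B \<in> p \<Longrightarrow> A \<inter> B \<in> p"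
  unfolding ultrafilter_on_def by blast

lemma uf_mono: "ultrafilter_on S p \<Longrightarrow> A \<in> p \<Longrightarrow> A \<subseteq> B \<Longrightarrow> B \<subseteq> S \<Longrightarrow> B \<in> p"
  unfolding ultrafilter_on_def by blast

lemma uf_ne: "ultrafilter_on S p \<Longrightarrow> A \<in> p \<Longrightarrow> A \<noteq> {}"
  unfolding ultrafilter_on_def by blast

lemma uf_compl: "ultrafilter_on S p \<Longrightarrow> A \<subseteq> S \<Longrightarrow> A \<notin> p \<Longrightarrow> S - A \<in> p"
  unfolding ultrafilter_on_def by blast

lemma uf_not_both: "ultrafilter_on S p \<Longrightarrow> A \<in> p \<Longrightarrow> S - A \<in> p \<Longrightarrow> False"
proof -
  assume u: "ultrafilter_on S p" and a: "A \<in> p" and b: "S - A \<in> p"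
  have "A \<inter> (S - A) \<in> p" using uf_int[OF u a b] .
  then show False using uf_ne[OF u] by blast
qed

lemma uf_restrict:
  assumes u: "ultrafilter_on S p" and P: "P \<in> p" and X: "X \<subseteq> S"
  shows "X \<in> p \<longleftrightarrow> X \<inter> P \<in> p"
  using uf_int[OF u _ P] uf_mono[OF u, of "X \<inter> P" X] X by blast

lemma uf_finite_Inter:
  assumes u: "ultrafilter_on S p" and "finite G" "G \<subseteq> p"
  shows "S \<inter> \<Inter>G \<in> p"
  using assms(2,3)
proof (induction G rule: finite_induct)
  case empty
  then show ?case using uf_S[OF u] by simp
next
  case (insert A G)
  then have "A \<in> p" "S \<inter> \<Inter>G \<in> p" by auto
  then have "A \<inter> (S \<inter> \<Inter>G) \<in> p" using uf_int[OF u] by blast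
  moreover have "A \<inter> (S \<inter> \<Inter>G) = S \<inter> \<Inter>(insert A G)" by auto
  ultimately show ?case by simp
qed

lemma uf_eq:
  assumes u: "ultrafilter_on S p" and v: "ultrafilter_on S q" and sub: "p \<subseteq> q"
  shows "p = q"
proof
  show "p \<subseteq> q" by fact
  show "q \<subseteq> p"
  proof
    fix A assume A: "A \<in> q"
    show "A \<in> p"
    proof (rule ccontr)
      assume "A \<notin> p"
      then have "S - A \<in> p" using uf_compl[OF u uf_sub[OF v A]] by blast
      then have "S - A \<in> q" using sub by blast
      then show False using uf_not_both[OF v A] by blast
    qed
  qed
qed

lemma delta_uf: "p \<in> deltaS S add \<Longrightarrow> ultrafilter_on S p"
  unfolding deltaS_def by blast

lemma delta_phi: "p \<in> deltaS S add \<Longrightarrow> x \<in> S \<Longrightarrow> phi S add x \<in> p"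
  unfolding deltaS_def by blast

lemma compact_delta:
  assumes G: "G \<subseteq> Pow S"
    and fip: "\<And>G' H. finite G' \<Longrightarrow> G' \<subseteq> G \<Longrightarrow> finite H \<Longrightarrow> H \<subseteq> S \<Longrightarrow>
               S \<inter> \<Inter>G' \<inter> \<Inter>(phi S add ` H) \<noteq> {}"
  shows "\<exists>p\<in>deltaS S add. G \<subseteq> p"
proof -
  define Base where "Base G' H = S \<inter> \<Inter>G' \<inter> \<Inter>(phi S add ` H)" for G' H
  define F where "F = {B. B \<subseteq> S \<and> (\<exists>G' H. finite G' \<and> G' \<subseteq> G \<and> finite H \<and> H \<subseteq> S \<and>
                         Base G' H \<subseteq> B)}"
  have memF: "B \<in> F" if "B \<subseteq> S" "finite G'" "G' \<subseteq> G" "finite H" "H \<subseteq> S" "Base G' H \<subseteq> B"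
    for B G' H
    unfolding F_def using that by blast
  have Fsub: "F \<subseteq> Pow S" unfolding F_def by blast
  have SF: "S \<in> F" by (rule memF[of S "{}" "{}"]) (auto simp: Base_def)
  have eF: "{} \<notin> F"
  proof
    assume "{} \<in> F"
    then obtain G' H where h: "finite G'" "G' \<subseteq> G" "finite H" "H \<subseteq> S" "Base G' H \<subseteq> {}"
      unfolding F_def by blast
    have "Base G' H \<noteq> {}" unfolding Base_def by (rule fip[OF h(1-4)])
    then show False using h(5) by blast
  qed
  have iF: "A \<inter> B \<in> F" if a: "A \<in> F" and b: "B \<in> F" for A B
  proof -
    obtain G1 H1 where h1: "finite G1" "G1 \<subseteq> G" "finite H1" "H1 \<subseteq> S" "Base G1 H1 \<subseteq> A" "A \<subseteq> S"
      using a unfolding F_def by blast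
    obtain G2 H2 where h2: "finite G2" "G2 \<subseteq> G" "finite H2" "H2 \<subseteq> S" "Base G2 H2 \<subseteq> B" "B \<subseteq> S"
      using b unfolding F_def by blast
    have "Base (G1 \<union> G2) (H1 \<union> H2) \<subseteq> A \<inter> B"
      using h1(5) h2(5) unfolding Base_def by blast
    then show ?thesis
      by (rule memF[rotated 5]) (use h1 h2 in auto)
  qed
  have uF: "B \<in> F" if "A \<in> F" "A \<subseteq> B" "B \<subseteq> S" for A B
    using that unfolding F_def by blast
  have "filter_on S F"
    by (rule filter_onI[OF Fsub SF eF iF uF])
  then obtain U where U: "ultrafilter_on S U" "F \<subseteq> U" using ultrafilter_exists by blast
  have "phi S add x \<in> U" if "x \<in> S" for x
  proof -
    have "phi S add x \<in> F"
      by (rule memF[of _ "{}" "{x}"]) (use that in \<open>auto simp: Base_def phi_def\<close>)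
    then show ?thesis using U by blast
  qed
  then have "U \<in> deltaS S add" using U(1) unfolding deltaS_def by blast
  moreover have "G \<subseteq> U"
  proof
    fix A assume A: "A \<in> G"
    have "A \<in> F"
      by (rule memF[of _ "{A}" "{}"]) (use A G in \<open>auto simp: Base_def\<close>)
    then show "A \<in> U" using U by blast
  qed
  ultimately show ?thesis by blast
qed



lemma ps_closed:
  "partial_semigroup S add \<Longrightarrow> a \<in> S \<Longrightarrow> b \<in> S \<Longrightarrow> add a b = Some c \<Longrightarrow> c \<in> S"
  unfolding partial_semigroup_def by blast

lemma ps_assoc:
  "partial_semigroup S add \<Longrightarrow> a \<in> S \<Longrightarrow> b \<in> S \<Longrightarrow> c \<in> S \<Longrightarrow>
   Option.bind (add a b) (\<lambda>d. add d c) = Option.bind (add b c) (\<lambda>e. add a e)"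
  unfolding partial_semigroup_def by blast

lemma ms_mem:
  "y \<in> minus_shift S add x A \<longleftrightarrow> y \<in> S \<and> (\<exists>z\<in>A. add x y = Some z)"
  unfolding minus_shift_def phi_def by auto

lemma ms_memI: "y \<in> S \<Longrightarrow> z \<in> A \<Longrightarrow> add x y = Some z \<Longrightarrow> y \<in> minus_shift S add x A"
  unfolding ms_mem by blast

lemma ms_memE:
  assumes "y \<in> minus_shift S add x A"
  obtains z where "y \<in> S" "z \<in> A" "add x y = Some z"
  using assms unfolding ms_mem by blast

lemma ms_sub: "minus_shift S add x A \<subseteq> S"
  unfolding minus_shift_def phi_def by auto

lemma ms_sub_phi: "minus_shift S add x A \<subseteq> phi S add x"
  unfolding minus_shift_def by auto

lemma ms_int: "minus_shift S add x (A \<inter> B) = minus_shift S add x A \<inter> minus_shift S add x B"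
  by (rule set_eqI) (auto simp: ms_mem)

lemma ms_mono: "A \<subseteq> B \<Longrightarrow> minus_shift S add x A \<subseteq> minus_shift S add x B"
  by (meson ms_memE ms_memI subsetD subsetI)

lemma ms_empty: "minus_shift S add x {} = {}"
  by (auto simp: ms_mem)

lemma ms_S:
  assumes ps: "partial_semigroup S add" and x: "x \<in> S"
  shows "minus_shift S add x S = phi S add x"
proof
  show "minus_shift S add x S \<subseteq> phi S add x" by (rule ms_sub_phi)
  show "phi S add x \<subseteq> minus_shift S add x S"
  proof
    fix y assume "y \<in> phi S add x"
    then obtain z where "y \<in> S" "add x y = Some z" unfolding phi_def by auto
    moreover then have "z \<in> S" using ps_closed[OF ps x] by blast
    ultimately show "y \<in> minus_shift S add x S" by (blast intro: ms_memI)
  qed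
qed

lemma ms_compl:
  assumes ps: "partial_semigroup S add" and x: "x \<in> S"
  shows "minus_shift S add x (S - A) = phi S add x - minus_shift S add x A"
proof
  show "minus_shift S add x (S - A) \<subseteq> phi S add x - minus_shift S add x A"
    using ms_sub_phi[of S add x "S - A"] by (auto simp: ms_mem)
  show "phi S add x - minus_shift S add x A \<subseteq> minus_shift S add x (S - A)"
  proof
    fix y assume y: "y \<in> phi S add x - minus_shift S add x A"
    then obtain z where "y \<in> S" "add x y = Some z" unfolding phi_def by auto
    moreover then have "z \<in> S" using ps_closed[OF ps x] by blast
    moreover have "z \<notin> A" using y calculation ms_memI[of y S z A add x] by blast
    ultimately show "y \<in> minus_shift S add x (S - A)" by (blast intro: ms_memI)
  qed
qed

lemma ms_ms:
  assumes ps: "partial_semigroup S add" and x: "x \<in> S" and y: "y \<in> S" and z: "add x y = Some z"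
  shows "minus_shift S add z A = minus_shift S add y (minus_shift S add x A)"
proof -
  have eq: "add z w = Option.bind (add y w) (\<lambda>e. add x e)" if w: "w \<in> S" for w
    using ps_assoc[OF ps x y w] z by simp
  show ?thesis
  proof (rule set_eqI)
    fix w
    show "w \<in> minus_shift S add z A \<longleftrightarrow> w \<in> minus_shift S add y (minus_shift S add x A)"
    proof
      assume "w \<in> minus_shift S add z A"
      then obtain a where w: "w \<in> S" "a \<in> A" "add z w = Some a" by (rule ms_memE)
      then obtain v where v: "add y w = Some v" "add x v = Some a"
        using eq[OF w(1)] by (cases "add y w") auto
      have "v \<in> S" using ps_closed[OF ps y w(1) v(1)] .
      then have "v \<in> minus_shift S add x A" using v(2) w(2) by (blast intro: ms_memI)
      then show "w \<in> minus_shift S add y (minus_shift S add x A)" using w(1) v(1) by (blast intro: ms_memI)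
    next
      assume "w \<in> minus_shift S add y (minus_shift S add x A)"
      then obtain v where w: "w \<in> S" "v \<in> minus_shift S add x A" "add y w = Some v" by (rule ms_memE)
      from w(2) obtain a where a: "a \<in> A" "add x v = Some a" by (rule ms_memE)
      have "add z w = Some a" using eq[OF w(1)] w(3) a(2) by simp
      then show "w \<in> minus_shift S add z A" using w(1) a(1) by (blast intro: ms_memI)
    qed
  qed
qed

lemma phi_ms:
  assumes ps: "partial_semigroup S add" and x: "x \<in> S" and z: "z \<in> S" and zx: "add z x = Some u"
  shows "phi S add u \<subseteq> minus_shift S add x (phi S add z)"
proof
  fix w assume "w \<in> phi S add u"
  then obtain b where w: "w \<in> S" "add u w = Some b" unfolding phi_def by auto
  have "Option.bind (add z x) (\<lambda>d. add d w) = Option.bind (add x w) (\<lambda>e. add z e)"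
    using ps_assoc[OF ps z x w(1)] .
  then have "Option.bind (add x w) (\<lambda>e. add z e) = Some b" using zx w(2) by simp
  then obtain v where v: "add x w = Some v" "add z v = Some b" by (cases "add x w") auto
  have "v \<in> S" using ps_closed[OF ps x w(1) v(1)] .
  then have "v \<in> phi S add z" using v(2) unfolding phi_def by auto
  then show "w \<in> minus_shift S add x (phi S add z)" using w(1) v(1) by (blast intro: ms_memI)
qed

definition psi :: "'a set \<Rightarrow> ('a \<Rightarrow> 'a \<Rightarrow> 'a option) \<Rightarrow> 'a set set \<Rightarrow> 'a set \<Rightarrow> 'a set" where
  "psi S add q A = {x \<in> S. minus_shift S add x A \<in> q}"

lemma uf_plus_mem: "A \<in> uf_plus S add p q \<longleftrightarrow> A \<subseteq> S \<and> psi S add q A \<in> p"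
  unfolding uf_plus_def psi_def by simp

lemma psi_sub: "psi S add q A \<subseteq> S"
  unfolding psi_def by auto

lemma psi_int:
  assumes u: "ultrafilter_on S q"
  shows "psi S add q (A \<inter> B) = psi S add q A \<inter> psi S add q B"
proof -
  have "minus_shift S add x (A \<inter> B) \<in> q \<longleftrightarrow> minus_shift S add x A \<in> q \<and> minus_shift S add x B \<in> q" for x
    using uf_int[OF u] uf_mono[OF u] ms_sub[of S add x] unfolding ms_int
    by (meson Int_lower1 Int_lower2)
  then show ?thesis unfolding psi_def by auto
qed

lemma psi_mono:
  assumes u: "ultrafilter_on S q" and AB: "A \<subseteq> B"
  shows "psi S add q A \<subseteq> psi S add q B"
  unfolding psi_def using uf_mono[OF u _ ms_mono[OF AB] ms_sub] by blast

lemma psi_empty: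
  assumes u: "ultrafilter_on S q"
  shows "psi S add q {} = {}"
  unfolding psi_def ms_empty using uf_ne[OF u] by auto

lemma psi_S:
  assumes ps: "partial_semigroup S add" and q: "q \<in> deltaS S add"
  shows "psi S add q S = S"
  unfolding psi_def using ms_S[OF ps] delta_phi[OF q] by auto

lemma psi_compl:
  assumes ps: "partial_semigroup S add" and q: "q \<in> deltaS S add"
  shows "psi S add q (S - A) = S - psi S add q A"
proof (rule set_eqI)
  fix x
  have u: "ultrafilter_on S q" using delta_uf[OF q] .
  show "x \<in> psi S add q (S - A) \<longleftrightarrow> x \<in> S - psi S add q A"
  proof (cases "x \<in> S")
    case False then show ?thesis unfolding psi_def by auto
  next
    case x: True
    have ph: "phi S add x \<in> q" using delta_phi[OF q x] .
    have e: "minus_shift S add x (S - A) = phi S add x - minus_shift S add x A"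
      using ms_compl[OF ps x] .
    show ?thesis
    proof (cases "minus_shift S add x A \<in> q")
      case True
      have "phi S add x - minus_shift S add x A \<notin> q"
      proof
        assume "phi S add x - minus_shift S add x A \<in> q"
        then have "(phi S add x - minus_shift S add x A) \<inter> minus_shift S add x A \<in> q"
          using uf_int[OF u _ True] by blast
        then show False using uf_ne[OF u] by blast
      qed
      then show ?thesis using True x e unfolding psi_def by auto
    next
      case False
      then have "S - minus_shift S add x A \<in> q" using uf_compl[OF u ms_sub] by blast
      then have "(S - minus_shift S add x A) \<inter> phi S add x \<in> q" using uf_int[OF u _ ph] by blast
      moreover have "(S - minus_shift S add x A) \<inter> phi S add x = phi S add x - minus_shift S add x A"
        unfolding phi_def by auto
      ultimately show ?thesis using False x e unfolding psi_def by auto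
    qed
  qed
qed

lemma uf_plus_delta:
  assumes ps: "partial_semigroup S add" and p: "p \<in> deltaS S add" and q: "q \<in> deltaS S add"
  shows "uf_plus S add p q \<in> deltaS S add"
proof -
  have up: "ultrafilter_on S p" and uq: "ultrafilter_on S q" using delta_uf p q by auto
  have "ultrafilter_on S (uf_plus S add p q)"
    unfolding ultrafilter_on_def
  proof (intro conjI ballI allI impI)
    show "uf_plus S add p q \<subseteq> Pow S" by (auto simp: uf_plus_mem)
    show "S \<in> uf_plus S add p q" unfolding uf_plus_mem psi_S[OF ps q] using uf_S[OF up] by simp
    show "{} \<notin> uf_plus S add p q" unfolding uf_plus_mem psi_empty[OF uq] using uf_ne[OF up] by blast
  next
    fix A B assume "A \<in> uf_plus S add p q" "B \<in> uf_plus S add p q"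
    then show "A \<inter> B \<in> uf_plus S add p q"
      unfolding uf_plus_mem psi_int[OF uq] using uf_int[OF up] by blast
  next
    fix A B assume "A \<in> uf_plus S add p q" "A \<subseteq> B \<and> B \<subseteq> S"
    then show "B \<in> uf_plus S add p q"
      unfolding uf_plus_mem using uf_mono[OF up _ psi_mono[OF uq] psi_sub] by blast
  next
    fix A assume A: "A \<subseteq> S"
    show "A \<in> uf_plus S add p q \<or> S - A \<in> uf_plus S add p q"
      unfolding uf_plus_mem psi_compl[OF ps q] using uf_compl[OF up psi_sub] A by blast
  qed
  moreover have "phi S add z \<in> uf_plus S add p q" if z: "z \<in> S" for z
  proof -
    have "phi S add z \<subseteq> psi S add q (phi S add z)"
    proof
      fix x assume x: "x \<in> phi S add z"
      then obtain u where xS: "x \<in> S" and u: "add z x = Some u" unfolding phi_def by auto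
      have uS: "u \<in> S" using ps_closed[OF ps z xS u] .
      have "minus_shift S add x (phi S add z) \<in> q"
        using uf_mono[OF uq delta_phi[OF q uS] phi_ms[OF ps xS z u] ms_sub] .
      then show "x \<in> psi S add q (phi S add z)" unfolding psi_def using xS by blast
    qed
    then have "psi S add q (phi S add z) \<in> p" using uf_mono[OF up delta_phi[OF p z] _ psi_sub] by blast
    then show ?thesis unfolding uf_plus_mem phi_def by auto
  qed
  ultimately show ?thesis unfolding deltaS_def by blast
qed

lemma uf_plus_assoc:
  assumes ps: "partial_semigroup S add" and p: "p \<in> deltaS S add" and q: "q \<in> deltaS S add"
    and r: "r \<in> deltaS S add"
  shows "uf_plus S add (uf_plus S add p q) r = uf_plus S add p (uf_plus S add q r)"
proof -
  have uq: "ultrafilter_on S q" using delta_uf q by auto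
  have key: "psi S add q (psi S add r A) = psi S add (uf_plus S add q r) A" for A
  proof (rule set_eqI)
    fix x
    show "x \<in> psi S add q (psi S add r A) \<longleftrightarrow> x \<in> psi S add (uf_plus S add q r) A"
    proof (cases "x \<in> S")
      case False then show ?thesis unfolding psi_def by auto
    next
      case x: True
      have ph: "phi S add x \<in> q" using delta_phi[OF q x] .
      have eq: "minus_shift S add x (psi S add r A) \<inter> phi S add x =
                psi S add r (minus_shift S add x A) \<inter> phi S add x"
      proof (rule set_eqI)
        fix y
        show "y \<in> minus_shift S add x (psi S add r A) \<inter> phi S add x \<longleftrightarrow>
              y \<in> psi S add r (minus_shift S add x A) \<inter> phi S add x"
        proof (cases "y \<in> phi S add x")
          case False then show ?thesis by blast
        next
          case True
          then obtain z where yS: "y \<in> S" and z: "add x y = Some z" unfolding phi_def by auto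
          have zS: "z \<in> S" using ps_closed[OF ps x yS z] .
          have "y \<in> minus_shift S add x (psi S add r A) \<longleftrightarrow> z \<in> psi S add r A"
            using yS z by (auto simp: ms_mem)
          also have "\<dots> \<longleftrightarrow> minus_shift S add z A \<in> r" unfolding psi_def using zS by auto
          also have "\<dots> \<longleftrightarrow> minus_shift S add y (minus_shift S add x A) \<in> r"
            using ms_ms[OF ps x yS z] by simp
          also have "\<dots> \<longleftrightarrow> y \<in> psi S add r (minus_shift S add x A)" unfolding psi_def using yS by auto
          finally show ?thesis using True by blast
        qed
      qed
      have "minus_shift S add x (psi S add r A) \<in> q \<longleftrightarrow> psi S add r (minus_shift S add x A) \<in> q"
        using uf_restrict[OF uq ph ms_sub] uf_restrict[OF uq ph psi_sub] eq by simp
      also have "\<dots> \<longleftrightarrow> minus_shift S add x A \<in> uf_plus S add q r"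
        using ms_sub[of S add x A] by (simp add: uf_plus_mem)
      finally show ?thesis unfolding psi_def using x by blast
    qed
  qed
  show ?thesis
  proof (rule set_eqI)
    fix A
    show "A \<in> uf_plus S add (uf_plus S add p q) r \<longleftrightarrow> A \<in> uf_plus S add p (uf_plus S add q r)"
      unfolding uf_plus_mem key[symmetric] using psi_sub[of S add r A] by auto
  qed
qed



definition XM :: "'a set \<Rightarrow> ('a \<Rightarrow> 'a \<Rightarrow> 'a option) \<Rightarrow> 'a set set \<Rightarrow> 'a set set set" where
  "XM S add M = {p \<in> deltaS S add. M \<subseteq> p}"

lemma delta_nonempty:
  assumes ad: "adequate S add" and ne: "S \<noteq> {}"
  shows "deltaS S add \<noteq> {}"
proof -
  have "\<exists>p\<in>deltaS S add. {} \<subseteq> p"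
  proof (rule compact_delta)
    fix G' :: "'a set set" and H
    assume "finite H" "H \<subseteq> S"
    show "S \<inter> \<Inter>G' \<inter> \<Inter>(phi S add ` H) \<noteq> {}" if "G' \<subseteq> {}"
    proof (cases "H = {}")
      case True then show ?thesis using that ne by simp
    next
      case False
      have "sigma S add H \<noteq> {}" using ad \<open>finite H\<close> \<open>H \<subseteq> S\<close> False unfolding adequate_def by blast
      moreover have "sigma S add H \<subseteq> S \<inter> \<Inter>G' \<inter> \<Inter>(phi S add ` H)"
        using that False unfolding sigma_def phi_def by auto
      ultimately show ?thesis by blast
    qed
  qed auto
  then show ?thesis by blast
qed

lemma closed_right_fip:
  assumes ps: "partial_semigroup S add" and ed: "e \<in> deltaS S add"
    and Xd: "X \<subseteq> deltaS S add" and M0sub: "M0 \<subseteq> Pow S"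
    and Xmem: "\<And>x. x \<in> X \<Longrightarrow> M0 \<subseteq> x"
    and up: "ultrafilter_on S p" and pI: "\<Inter>((\<lambda>x. uf_plus S add x e) ` X) \<subseteq> p"
    and G': "finite G'" "G' \<subseteq> M0 \<union> psi S add e ` p" and H: "finite H" "H \<subseteq> S"
  shows "S \<inter> \<Inter>G' \<inter> \<Inter>(phi S add ` H) \<noteq> {}"
proof -
  have ue: "ultrafilter_on S e" using delta_uf[OF ed] .
  define G1 where "G1 = G' \<inter> M0"
  have sub: "G' - M0 \<subseteq> psi S add e ` p" using G'(2) by blast
  have fin: "finite (G' - M0)" using G'(1) by blast
  obtain P' where P': "P' \<subseteq> p" "finite P'" "G' - M0 = psi S add e ` P'"
    using finite_subset_image[OF fin sub] by blast
  define Ast where "Ast = S \<inter> \<Inter>P'"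
  have Ast: "Ast \<in> p" unfolding Ast_def using uf_finite_Inter[OF up P'(2,1)] .
  have AstS: "Ast \<subseteq> S" unfolding Ast_def by blast
  define B' where "B' = S \<inter> \<Inter>(G1 \<union> phi S add ` H)"
  have B'x: "B' \<in> x" if x: "x \<in> X" for x
  proof -
    have xd: "x \<in> deltaS S add" using x Xd by blast
    have m: "M0 \<subseteq> x" using Xmem[OF x] .
    have g1: "G1 \<subseteq> x" unfolding G1_def using m by blast
    have g2: "phi S add ` H \<subseteq> x"
    proof (rule image_subsetI)
      fix h assume "h \<in> H" then show "phi S add h \<in> x" using delta_phi[OF xd] H(2) by blast
    qed
    show ?thesis unfolding B'_def
      by (rule uf_finite_Inter[OF delta_uf[OF xd]]) (use G'(1) H(1) g1 g2 in \<open>auto simp: G1_def\<close>)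
  qed
  have nonempty: "B' \<inter> psi S add e Ast \<noteq> {}"
  proof
    assume emp: "B' \<inter> psi S add e Ast = {}"
    have "S - Ast \<in> uf_plus S add x e" if x: "x \<in> X" for x
    proof -
      have xd: "x \<in> deltaS S add" using x Xd by blast
      have ux: "ultrafilter_on S x" using delta_uf[OF xd] .
      have "psi S add e Ast \<notin> x"
      proof
        assume h: "psi S add e Ast \<in> x"
        have "B' \<inter> psi S add e Ast \<in> x" using uf_int[OF ux B'x[OF x] h] .
        then have "{} \<in> x" using emp by simp
        then show False using uf_ne[OF ux] by blast
      qed
      then have "Ast \<notin> uf_plus S add x e" unfolding uf_plus_mem by blast
      then show ?thesis using uf_compl[OF delta_uf[OF uf_plus_delta[OF ps xd ed]] AstS] by blast
    qed
    then have "S - Ast \<in> \<Inter>((\<lambda>x. uf_plus S add x e) ` X)" by blast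
    then have "S - Ast \<in> p" using pI by blast
    then show False using uf_not_both[OF up Ast] by blast
  qed
  have "B' \<inter> psi S add e Ast \<subseteq> S \<inter> \<Inter>G' \<inter> \<Inter>(phi S add ` H)"
  proof
    fix s assume s: "s \<in> B' \<inter> psi S add e Ast"
    have sB: "s \<in> S" "\<And>g. g \<in> G1 \<Longrightarrow> s \<in> g" "\<And>h. h \<in> H \<Longrightarrow> s \<in> phi S add h"
      using s unfolding B'_def by auto
    have "s \<in> g" if g: "g \<in> G'" for g
    proof (cases "g \<in> M0")
      case True then show ?thesis using sB(2) g unfolding G1_def by blast
    next
      case False
      then have "g \<in> psi S add e ` P'" using g P'(3) by blast
      then obtain A where A: "A \<in> P'" "g = psi S add e A" by blast
      have "Ast \<subseteq> A" unfolding Ast_def using A(1) by blast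
      then have "psi S add e Ast \<subseteq> g" using psi_mono[OF ue] A(2) by blast
      then show ?thesis using s by blast
    qed
    then show "s \<in> S \<inter> \<Inter>G' \<inter> \<Inter>(phi S add ` H)" using sB by blast
  qed
  then show ?thesis using nonempty by blast
qed

lemma closed_right:
  assumes ps: "partial_semigroup S add" and ed: "e \<in> deltaS S add"
    and Xd: "X \<subseteq> deltaS S add" and M0sub: "M0 \<subseteq> Pow S"
    and Xmem: "\<And>x. x \<in> X \<longleftrightarrow> x \<in> deltaS S add \<and> M0 \<subseteq> x"
    and pd: "p \<in> deltaS S add" and pI: "\<Inter>((\<lambda>x. uf_plus S add x e) ` X) \<subseteq> p"
  shows "p \<in> (\<lambda>x. uf_plus S add x e) ` X"
proof -
  have up: "ultrafilter_on S p" using delta_uf[OF pd] .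
  define G where "G = M0 \<union> psi S add e ` p"
  have GS: "G \<subseteq> Pow S" unfolding G_def using M0sub psi_sub[of S add e] by blast
  have "\<exists>x\<in>deltaS S add. G \<subseteq> x"
  proof (rule compact_delta[OF GS])
    have Xm: "\<And>x. x \<in> X \<Longrightarrow> M0 \<subseteq> x" using Xmem by blast
    fix G' H assume h: "finite G'" "G' \<subseteq> G" "finite H" "H \<subseteq> S"
    have h2: "G' \<subseteq> M0 \<union> psi S add e ` p" using h(2) unfolding G_def .
    show "S \<inter> \<Inter>G' \<inter> \<Inter>(phi S add ` H) \<noteq> {}"
      by (rule closed_right_fip[OF ps ed Xd M0sub Xm up pI h(1) h2 h(3,4)])
  qed
  then obtain x where xd: "x \<in> deltaS S add" and Gx: "G \<subseteq> x" by blast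
  have "M0 \<subseteq> x" using Gx unfolding G_def by blast
  then have xX: "x \<in> X" using Xmem[of x] xd by blast
  have "p \<subseteq> uf_plus S add x e"
  proof
    fix A assume A: "A \<in> p"
    then have "psi S add e A \<in> x" using Gx unfolding G_def by blast
    then show "A \<in> uf_plus S add x e" unfolding uf_plus_mem using uf_sub[OF up A] by blast
  qed
  then have "p = uf_plus S add x e"
    using uf_eq[OF up delta_uf[OF uf_plus_delta[OF ps xd ed]]] by blast
  then show ?thesis using xX by blast
qed

lemma closed_fix:
  assumes ps: "partial_semigroup S add" and ed: "e \<in> deltaS S add"
    and Xd: "X \<subseteq> deltaS S add"
    and Xmem: "\<And>x. x \<in> X \<longleftrightarrow> x \<in> deltaS S add \<and> M0 \<subseteq> x"
    and Yne: "{x \<in> X. uf_plus S add x e = e} \<noteq> {}"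
    and pd: "p \<in> deltaS S add" and pI: "\<Inter>{x \<in> X. uf_plus S add x e = e} \<subseteq> p"
  shows "p \<in> {x \<in> X. uf_plus S add x e = e}"
proof -
  define Y2 where "Y2 = {x \<in> X. uf_plus S add x e = e}"
  have up: "ultrafilter_on S p" using delta_uf[OF pd] .
  have ue: "ultrafilter_on S e" using delta_uf[OF ed] .
  have "M0 \<subseteq> \<Inter>Y2" using Yne Xmem unfolding Y2_def by blast
  then have pX: "p \<in> X" using Xmem pd pI unfolding Y2_def by blast
  have "uf_plus S add p e \<subseteq> e"
  proof
    fix A assume A: "A \<in> uf_plus S add p e"
    then have AS: "A \<subseteq> S" and ps': "psi S add e A \<in> p" unfolding uf_plus_mem by auto
    show "A \<in> e"
    proof (rule ccontr)
      assume nA: "A \<notin> e"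
      have "S - psi S add e A \<in> y" if y: "y \<in> Y2" for y
      proof -
        have yX: "y \<in> X" "uf_plus S add y e = e" using y unfolding Y2_def by auto
        have yd: "y \<in> deltaS S add" using yX Xd by blast
        have "psi S add e A \<notin> y"
        proof
          assume "psi S add e A \<in> y"
          then have "A \<in> uf_plus S add y e" unfolding uf_plus_mem using AS by blast
          then show False using yX(2) nA by simp
        qed
        then show ?thesis using uf_compl[OF delta_uf[OF yd] psi_sub] by blast
      qed
      then have "S - psi S add e A \<in> p" using pI unfolding Y2_def by blast
      then show False using uf_not_both[OF up ps'] by blast
    qed
  qed
  then have "uf_plus S add p e = e"
    using uf_eq[OF delta_uf[OF uf_plus_delta[OF ps pd ed]] ue] by blast
  then show ?thesis using pX by blast
qed

lemma ellis:
  assumes ps: "partial_semigroup S add" and ad: "adequate S add" and ne: "S \<noteq> {}"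
  shows "\<exists>p\<in>deltaS S add. uf_plus S add p p = p"
proof -
  define \<A> where "\<A> = {M. M \<subseteq> Pow S \<and> XM S add M \<noteq> {} \<and>
      (\<forall>p\<in>XM S add M. \<forall>q\<in>XM S add M. uf_plus S add p q \<in> XM S add M)}"
  have XM_delta: "XM S add M \<subseteq> deltaS S add" for M unfolding XM_def by blast
  have XM_mem: "p \<in> XM S add M \<longleftrightarrow> p \<in> deltaS S add \<and> M \<subseteq> p" for p M unfolding XM_def by blast
  have A_I: "M \<in> \<A>" if "M \<subseteq> Pow S" "XM S add M \<noteq> {}"
    "\<And>p q. p \<in> XM S add M \<Longrightarrow> q \<in> XM S add M \<Longrightarrow> uf_plus S add p q \<in> XM S add M" for M
    unfolding \<A>_def using that by blast
  have A_D: "M \<subseteq> Pow S" "XM S add M \<noteq> {}"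
    "\<And>p q. p \<in> XM S add M \<Longrightarrow> q \<in> XM S add M \<Longrightarrow> uf_plus S add p q \<in> XM S add M"
    if "M \<in> \<A>" for M using that unfolding \<A>_def by blast+
  have e0: "{} \<in> \<A>"
  proof (rule A_I)
    show "XM S add {} \<noteq> {}" using delta_nonempty[OF ad ne] unfolding XM_def by simp
    fix p q assume "p \<in> XM S add {}" "q \<in> XM S add {}"
    then show "uf_plus S add p q \<in> XM S add {}"
      using uf_plus_delta[OF ps] unfolding XM_def by simp
  qed simp
  have chain_ok: "\<Union>\<C> \<in> \<A>" if cne: "\<C> \<noteq> {}" and cch: "subset.chain \<A> \<C>" for \<C>
  proof -
    have sub: "\<C> \<subseteq> \<A>" using cch unfolding subset.chain_def by auto
    show ?thesis
    proof (rule A_I)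
      show "\<Union>\<C> \<subseteq> Pow S" using sub A_D(1) by blast
      have "\<exists>p\<in>deltaS S add. \<Union>\<C> \<subseteq> p"
      proof (rule compact_delta)
        show "\<Union>\<C> \<subseteq> Pow S" using sub A_D(1) by blast
        fix G' H assume G': "finite G'" "G' \<subseteq> \<Union>\<C>" and H: "finite H" "H \<subseteq> S"
        obtain M where M: "M \<in> \<C>" "G' \<subseteq> M"
        proof (cases "G' = {}")
          case True
          obtain M where "M \<in> \<C>" using cne by blast
          then show thesis using that True by blast
        next
          case False
          show thesis using finite_subset_Union_chain[OF G'(1) G'(2) cne cch] that by blast
        qed
        obtain p where p: "p \<in> XM S add M" using A_D(2)[of M] sub M(1) by blast
        have pd: "p \<in> deltaS S add" and Mp: "M \<subseteq> p" using p unfolding XM_def by auto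
        have up: "ultrafilter_on S p" using delta_uf[OF pd] .
        have g1: "G' \<subseteq> p" using M(2) Mp by (rule subset_trans)
        have g2: "phi S add ` H \<subseteq> p"
        proof (rule image_subsetI)
          fix x assume "x \<in> H" then show "phi S add x \<in> p" using delta_phi[OF pd] H(2) by blast
        qed
        have "S \<inter> \<Inter>(G' \<union> phi S add ` H) \<in> p"
          by (rule uf_finite_Inter[OF up]) (use G'(1) H(1) g1 g2 in auto)
        then have "S \<inter> \<Inter>(G' \<union> phi S add ` H) \<noteq> {}" using uf_ne[OF up] by blast
        then show "S \<inter> \<Inter>G' \<inter> \<Inter>(phi S add ` H) \<noteq> {}" by auto
      qed
      then show "XM S add (\<Union>\<C>) \<noteq> {}" unfolding XM_def by blast
    next
      fix p q assume p: "p \<in> XM S add (\<Union>\<C>)" and q: "q \<in> XM S add (\<Union>\<C>)"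
      have pd: "p \<in> deltaS S add" and qd: "q \<in> deltaS S add" using p q unfolding XM_def by auto
      have "M \<subseteq> uf_plus S add p q" if M: "M \<in> \<C>" for M
      proof -
        have "p \<in> XM S add M" "q \<in> XM S add M" using p q M unfolding XM_def by auto
        then have "uf_plus S add p q \<in> XM S add M" using A_D(3)[of M] sub M by blast
        then show ?thesis unfolding XM_def by blast
      qed
      then show "uf_plus S add p q \<in> XM S add (\<Union>\<C>)"
        using uf_plus_delta[OF ps pd qd] unfolding XM_def by blast
    qed
  qed
  obtain M0 where M0: "M0 \<in> \<A>" and max: "\<And>X. X \<in> \<A> \<Longrightarrow> M0 \<subseteq> X \<Longrightarrow> X = M0"
  proof -
    have "\<A> \<noteq> {}" using e0 by blast
    from subset_Zorn_nonempty[OF this chain_ok] show thesis using that by blast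
  qed
  define X where "X = XM S add M0"
  have M0sub: "M0 \<subseteq> Pow S" using A_D(1)[OF M0] .
  have Xne: "X \<noteq> {}" using A_D(2)[OF M0] unfolding X_def .
  have Xsg: "\<And>p q. p \<in> X \<Longrightarrow> q \<in> X \<Longrightarrow> uf_plus S add p q \<in> X"
    using A_D(3)[OF M0] unfolding X_def by blast
  have Xd: "X \<subseteq> deltaS S add" unfolding X_def XM_def by blast
  have Xmem: "p \<in> X \<longleftrightarrow> p \<in> deltaS S add \<and> M0 \<subseteq> p" for p unfolding X_def XM_def by blast
  have minimal: "Y = X" if Yne: "Y \<noteq> {}" and YX: "Y \<subseteq> X"
    and Ysg: "\<And>p q. p \<in> Y \<Longrightarrow> q \<in> Y \<Longrightarrow> uf_plus S add p q \<in> Y"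
    and Ycl: "\<And>p. p \<in> deltaS S add \<Longrightarrow> \<Inter>Y \<subseteq> p \<Longrightarrow> p \<in> Y" for Y
  proof -
    define M where "M = \<Inter>Y \<union> M0"
    have YM: "XM S add M = Y"
    proof
      show "XM S add M \<subseteq> Y"
      proof
        fix p assume "p \<in> XM S add M"
        then have "p \<in> deltaS S add" "\<Inter>Y \<subseteq> p" unfolding XM_def M_def by auto
        then show "p \<in> Y" by (rule Ycl)
      qed
      show "Y \<subseteq> XM S add M"
      proof
        fix p assume pY: "p \<in> Y"
        then have "p \<in> X" using YX by blast
        then have "p \<in> deltaS S add" "M0 \<subseteq> p" using Xmem by auto
        moreover have "\<Inter>Y \<subseteq> p" using pY by blast
        ultimately show "p \<in> XM S add M" unfolding XM_def M_def by blast
      qed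
    qed
    have "M \<in> \<A>"
    proof (rule A_I)
      have "\<Inter>Y \<subseteq> Pow S"
      proof
        fix A assume "A \<in> \<Inter>Y"
        obtain p where "p \<in> Y" using Yne by blast
        then have "A \<in> p" "p \<in> deltaS S add" using \<open>A \<in> \<Inter>Y\<close> YX Xd by auto
        then show "A \<in> Pow S" using uf_sub[OF delta_uf] by blast
      qed
      then show "M \<subseteq> Pow S" unfolding M_def using M0sub by blast
      show "XM S add M \<noteq> {}" using YM Yne by simp
      fix p q assume "p \<in> XM S add M" "q \<in> XM S add M"
      then show "uf_plus S add p q \<in> XM S add M" using YM Ysg by simp
    qed
    then have "M = M0" using max[of M] unfolding M_def by blast
    then show "Y = X" using YM unfolding X_def by simp
  qed
  obtain e where eX: "e \<in> X" using Xne by blast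
  have ed: "e \<in> deltaS S add" using eX Xd by blast
  have ue: "ultrafilter_on S e" using delta_uf[OF ed] .
  define Y1 where "Y1 = (\<lambda>x. uf_plus S add x e) ` X"
  have Y1X: "Y1 \<subseteq> X" unfolding Y1_def using Xsg eX by blast
  have Y1ne: "Y1 \<noteq> {}" unfolding Y1_def using Xne by blast
  have Y1sg: "uf_plus S add p q \<in> Y1" if "p \<in> Y1" "q \<in> Y1" for p q
  proof -
    obtain x x' where x: "x \<in> X" "p = uf_plus S add x e" and x': "x' \<in> X" "q = uf_plus S add x' e"
      using \<open>p \<in> Y1\<close> \<open>q \<in> Y1\<close> unfolding Y1_def by blast
    have xd: "x \<in> deltaS S add" "x' \<in> deltaS S add" using x x' Xd by auto
    have pd: "p \<in> deltaS S add" using x uf_plus_delta[OF ps xd(1) ed] by simp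
    have "uf_plus S add p q = uf_plus S add (uf_plus S add p x') e"
      using x'(2) uf_plus_assoc[OF ps pd xd(2) ed] by simp
    moreover have "uf_plus S add p x' \<in> X"
    proof -
      have "p \<in> X" using Xsg[OF x(1) eX] x(2) by simp
      then show ?thesis using Xsg x'(1) by blast
    qed
    ultimately show ?thesis unfolding Y1_def by blast
  qed
  have Y1cl: "p \<in> Y1" if pd: "p \<in> deltaS S add" and pI: "\<Inter>Y1 \<subseteq> p" for p
  proof -
    have "p \<in> (\<lambda>x. uf_plus S add x e) ` X"
      by (rule closed_right[OF ps ed Xd M0sub Xmem pd]) (use pI in \<open>simp add: Y1_def\<close>)
    then show ?thesis by (simp add: Y1_def)
  qed
  have "Y1 = X" by (rule minimal[OF Y1ne Y1X Y1sg Y1cl])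
  then have "e \<in> Y1" using eX by simp
  then obtain x0 where x0: "x0 \<in> X" "e = uf_plus S add x0 e" unfolding Y1_def by blast
  define Y2 where "Y2 = {x \<in> X. uf_plus S add x e = e}"
  have Y2X: "Y2 \<subseteq> X" unfolding Y2_def by blast
  have Y2ne: "Y2 \<noteq> {}" unfolding Y2_def using x0 by force
  have Y2sg: "uf_plus S add p q \<in> Y2" if "p \<in> Y2" "q \<in> Y2" for p q
  proof -
    have p: "p \<in> X" "uf_plus S add p e = e" and q: "q \<in> X" "uf_plus S add q e = e"
      using \<open>p \<in> Y2\<close> \<open>q \<in> Y2\<close> unfolding Y2_def by auto
    have pd: "p \<in> deltaS S add" and qd: "q \<in> deltaS S add" using p(1) q(1) Xd by auto
    have "uf_plus S add (uf_plus S add p q) e = uf_plus S add p (uf_plus S add q e)"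
      by (rule uf_plus_assoc[OF ps pd qd ed])
    then have "uf_plus S add (uf_plus S add p q) e = e" using p q by simp
    moreover have "uf_plus S add p q \<in> X" using Xsg[OF p(1) q(1)] .
    ultimately show ?thesis unfolding Y2_def by blast
  qed
  have Y2cl: "p \<in> Y2" if pd: "p \<in> deltaS S add" and pI: "\<Inter>Y2 \<subseteq> p" for p
  proof -
    have "p \<in> {x \<in> X. uf_plus S add x e = e}"
      by (rule closed_fix[OF ps ed Xd Xmem _ pd]) (use Y2ne pI in \<open>simp_all add: Y2_def\<close>)
    then show ?thesis by (simp add: Y2_def)
  qed
  have "Y2 = X" by (rule minimal[OF Y2ne Y2X Y2sg Y2cl])
  then have "uf_plus S add e e = e" using eX unfolding Y2_def by blast
  then show ?thesis using ed by blast
qed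



definition FINs :: "nat set set" where "FINs = {G. finite G \<and> G \<noteq> {}}"

definition addF :: "nat set \<Rightarrow> nat set \<Rightarrow> nat set option" where
  "addF a b = (if a \<inter> b = {} then Some (a \<union> b) else None)"

lemma FIN_ps: "partial_semigroup FINs addF"
  unfolding partial_semigroup_def
proof (intro conjI ballI allI impI)
  fix a b c assume "a \<in> FINs" "b \<in> FINs" "addF a b = Some c"
  then show "c \<in> FINs" unfolding FINs_def addF_def by (auto split: if_splits)
next
  fix a b c :: "nat set"
  show "Option.bind (addF a b) (\<lambda>d. addF d c) = Option.bind (addF b c) (addF a)"
  proof (cases "a \<inter> b = {} \<and> b \<inter> c = {} \<and> a \<inter> c = {}")
    case True
    then show ?thesis unfolding addF_def by (auto simp: Un_assoc Int_Un_distrib Int_Un_distrib2)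
  next
    case False
    then show ?thesis unfolding addF_def by (auto simp: Int_Un_distrib Int_Un_distrib2)
  qed
qed

lemma FIN_adequate: "adequate FINs addF"
  unfolding adequate_def
proof (intro allI impI)
  fix H assume H: "finite H \<and> H \<noteq> {} \<and> H \<subseteq> FINs"
  define N where "N = Suc (Max (\<Union>H))"
  have finU: "finite (\<Union>H)" using H unfolding FINs_def by auto
  have "{N} \<in> phi FINs addF s" if s: "s \<in> H" for s
  proof -
    have "\<forall>k\<in>s. k < N" using s finU unfolding N_def by (meson Max_ge UnionI le_imp_less_Suc)
    then have "s \<inter> {N} = {}" by blast
    then show ?thesis unfolding phi_def FINs_def addF_def by auto
  qed
  then have "{N} \<in> sigma FINs addF H" unfolding sigma_def by blast
  then show "sigma FINs addF H \<noteq> {}" by blast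
qed

lemma FIN_idem: "\<exists>p\<in>deltaS FINs addF. uf_plus FINs addF p p = p"
  by (rule ellis[OF FIN_ps FIN_adequate]) (auto simp: FINs_def)

lemma tail_in_p:
  assumes p: "p \<in> deltaS FINs addF"
  shows "{G \<in> FINs. G \<inter> {..<M} = {}} \<in> p"
proof (cases "M = 0")
  case True
  then show ?thesis using uf_S[OF delta_uf[OF p]] by simp
next
  case False
  then have "{..<M} \<in> FINs" unfolding FINs_def by auto
  then have "phi FINs addF {..<M} \<in> p" by (rule delta_phi[OF p])
  moreover have "phi FINs addF {..<M} = {G \<in> FINs. G \<inter> {..<M} = {}}"
    unfolding phi_def addF_def by auto
  ultimately show ?thesis by simp
qed

lemma push_idem:
  fixes \<phi> :: "'b \<Rightarrow> 'a"
  assumes pd: "p \<in> deltaS D addD" and pid: "uf_plus D addD p p = p"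
    and \<phi>T: "\<And>G. G \<in> D \<Longrightarrow> \<phi> G \<in> T"
    and hom: "\<And>G G' w. G \<in> D \<Longrightarrow> G' \<in> D \<Longrightarrow> addD G G' = Some w \<Longrightarrow>
                 w \<in> D \<and> addT (\<phi> G) (\<phi> G') = Some (\<phi> w)"
    and phiT: "\<And>x. x \<in> T \<Longrightarrow> {G \<in> D. \<phi> G \<in> phi T addT x} \<in> p"
  shows "{A. A \<subseteq> T \<and> {G \<in> D. \<phi> G \<in> A} \<in> p} \<in> deltaS T addT \<and>
    uf_plus T addT {A. A \<subseteq> T \<and> {G \<in> D. \<phi> G \<in> A} \<in> p} {A. A \<subseteq> T \<and> {G \<in> D. \<phi> G \<in> A} \<in> p}
     = {A. A \<subseteq> T \<and> {G \<in> D. \<phi> G \<in> A} \<in> p}"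
proof -
  define q where "q = {A. A \<subseteq> T \<and> {G \<in> D. \<phi> G \<in> A} \<in> p}"
  have up: "ultrafilter_on D p" using delta_uf[OF pd] .
  define pre where "pre A = {G \<in> D. \<phi> G \<in> A}" for A
  have qmem: "A \<in> q \<longleftrightarrow> A \<subseteq> T \<and> pre A \<in> p" for A unfolding q_def pre_def by simp
  have preD: "pre A \<subseteq> D" for A unfolding pre_def by blast
  have uq: "ultrafilter_on T q"
    unfolding ultrafilter_on_def
  proof (intro conjI ballI allI impI)
    show "q \<subseteq> Pow T" unfolding q_def by blast
    have "pre T = D" unfolding pre_def using \<phi>T by blast
    then show "T \<in> q" unfolding qmem using uf_S[OF up] by simp
    have "pre {} = {}" unfolding pre_def by simp
    then show "{} \<notin> q" unfolding qmem using uf_ne[OF up] by auto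
  next
    fix A B assume "A \<in> q" "B \<in> q"
    moreover have "pre (A \<inter> B) = pre A \<inter> pre B" unfolding pre_def by blast
    ultimately show "A \<inter> B \<in> q" unfolding qmem using uf_int[OF up] by auto
  next
    fix A B assume A: "A \<in> q" and AB: "A \<subseteq> B \<and> B \<subseteq> T"
    then have "pre A \<subseteq> pre B" unfolding pre_def by blast
    then show "B \<in> q" using A AB uf_mono[OF up _ _ preD] unfolding qmem by blast
  next
    fix A assume A: "A \<subseteq> T"
    have "pre (T - A) = D - pre A" unfolding pre_def using \<phi>T by blast
    then show "A \<in> q \<or> T - A \<in> q" unfolding qmem using uf_compl[OF up preD] A by auto
  qed
  have qphi: "phi T addT x \<in> q" if x: "x \<in> T" for x
    unfolding qmem using phiT[OF x] unfolding pre_def phi_def by auto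
  have qd: "q \<in> deltaS T addT" unfolding deltaS_def using uq qphi by blast
  have key: "pre (psi T addT q A) = psi D addD p (pre A)" if AT: "A \<subseteq> T" for A
  proof (rule set_eqI)
    fix G
    show "G \<in> pre (psi T addT q A) \<longleftrightarrow> G \<in> psi D addD p (pre A)"
    proof (cases "G \<in> D")
      case False then show ?thesis unfolding pre_def psi_def by auto
    next
      case GD: True
      have ph: "phi D addD G \<in> p" using delta_phi[OF pd GD] .
      have eq: "pre (minus_shift T addT (\<phi> G) A) \<inter> phi D addD G = minus_shift D addD G (pre A) \<inter> phi D addD G"
      proof (rule set_eqI)
        fix G'
        show "G' \<in> pre (minus_shift T addT (\<phi> G) A) \<inter> phi D addD G \<longleftrightarrow>
              G' \<in> minus_shift D addD G (pre A) \<inter> phi D addD G"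
        proof (cases "G' \<in> phi D addD G")
          case False then show ?thesis by blast
        next
          case True
          then obtain w where G'D: "G' \<in> D" and w: "addD G G' = Some w" unfolding phi_def by auto
          have wD: "w \<in> D" and hw: "addT (\<phi> G) (\<phi> G') = Some (\<phi> w)" using hom[OF GD G'D w] by auto
          have "G' \<in> pre (minus_shift T addT (\<phi> G) A) \<longleftrightarrow> \<phi> w \<in> A"
            unfolding pre_def ms_mem using G'D hw \<phi>T[OF G'D] by auto
          moreover have "G' \<in> minus_shift D addD G (pre A) \<longleftrightarrow> \<phi> w \<in> A"
            unfolding ms_mem pre_def using G'D w wD by auto
          ultimately show ?thesis using True by blast
        qed
      qed
      have "G \<in> pre (psi T addT q A) \<longleftrightarrow> minus_shift T addT (\<phi> G) A \<in> q"
        unfolding pre_def psi_def using GD \<phi>T[OF GD] by auto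
      also have "\<dots> \<longleftrightarrow> pre (minus_shift T addT (\<phi> G) A) \<in> p" unfolding qmem using ms_sub[of T addT "\<phi> G" A] by simp
      also have "\<dots> \<longleftrightarrow> minus_shift D addD G (pre A) \<in> p"
        using uf_restrict[OF up ph preD] uf_restrict[OF up ph ms_sub] eq by simp
      also have "\<dots> \<longleftrightarrow> G \<in> psi D addD p (pre A)" unfolding psi_def using GD by auto
      finally show ?thesis .
    qed
  qed
  have "uf_plus T addT q q = q"
  proof (rule set_eqI)
    fix A
    show "A \<in> uf_plus T addT q q \<longleftrightarrow> A \<in> q"
    proof (cases "A \<subseteq> T")
      case False then show ?thesis unfolding uf_plus_mem qmem by blast
    next
      case True
      have "A \<in> uf_plus T addT q q \<longleftrightarrow> pre (psi T addT q A) \<in> p"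
        unfolding uf_plus_mem qmem using True psi_sub[of T addT q A] by simp
      also have "\<dots> \<longleftrightarrow> psi D addD p (pre A) \<in> p" using key[OF True] by simp
      also have "\<dots> \<longleftrightarrow> pre A \<in> uf_plus D addD p p" unfolding uf_plus_mem using preD[of A] by simp
      also have "\<dots> \<longleftrightarrow> A \<in> q" unfolding qmem pid using True by blast
      finally show ?thesis .
    qed
  qed
  then show ?thesis using qd unfolding q_def by simp
qed

lemma divmod_unique:
  fixes m :: nat
  assumes a: "n < m" and b: "n' < m" and c: "t * m + n = t' * m + n'"
  shows "t = t' \<and> n = n'"
proof -
  have m0: "m > 0" using a by simp
  have "n = (t * m + n) mod m" using a by simp
  also have "\<dots> = (t' * m + n') mod m" by (simp only: c)
  also have "\<dots> = n'" using b by simp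
  finally have nn: "n = n'" .
  have "t = (t * m + n) div m" using a by simp
  also have "\<dots> = (t' * m + n') div m" by (simp only: c)
  also have "\<dots> = t'" using b by simp
  finally show ?thesis using nn by simp
qed

theorem theorem11:
  fixes l m :: nat
    and S :: "nat \<Rightarrow> 'a set"
    and add :: "nat \<Rightarrow> 'a \<Rightarrow> 'a \<Rightarrow> 'a option"
    and y :: "nat \<Rightarrow> nat \<Rightarrow> 'a"
    and C :: "(nat \<Rightarrow> 'a) set"
  assumes "l \<ge> 1" and "m \<ge> 1"
    and "\<forall>i<l. countable (S i) \<and> comm_partial_semigroup (S i) (add i) \<and> adequate (S i) (add i)"
    and "\<forall>i<l. adequate_seq (S i) (add i) (y i)"
    and "IP_star (prod_carrier {..<l} S) (prod_add {..<l} add) C"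
  shows "\<exists>x :: nat \<Rightarrow> nat \<Rightarrow> 'a.
           (\<forall>i<l. weak_product_subsystem (add i) (y i) m (x i)) \<and>
           PiE {..<l} (\<lambda>i. FS (add i) (x i) m) \<subseteq> C"
proof -
  define T where "T = prod_carrier {..<l} S"
  define addT where "addT = prod_add {..<l} add"
  have m1: "m \<ge> 1" using assms(2) .
  have cs: "comm_partial_semigroup (S i) (add i)" if "i < l" for i using assms(3) that by blast
  have ps: "partial_semigroup (S i) (add i)" if "i < l" for i
    using cs[OF that] unfolding comm_partial_semigroup_def by blast
  have aseq: "adequate_seq (S i) (add i) (y i)" if "i < l" for i using assms(4) that by blast
  have yS: "\<forall>n. y i n \<in> S i" if "i < l" for i
    using aseq[OF that] unfolding adequate_seq_def by (elim conjE) assumption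
  have pdef: "\<exists>z. psum (add i) (y i) K = Some z" if "i < l" "finite K" "K \<noteq> {}" for i K
  proof -
    have "\<forall>F. finite F \<and> F \<noteq> {} \<longrightarrow> psum (add i) (y i) F \<noteq> None"
      using aseq[OF that(1)] unfolding adequate_seq_def by (elim conjE) assumption
    then show ?thesis using that(2,3) by auto
  qed
  have tails: "\<exists>M. \<forall>K. finite K \<and> K \<noteq> {} \<and> K \<subseteq> {M..} \<longrightarrow>
                  (\<exists>z. psum (add i) (y i) K = Some z \<and> add i h z \<noteq> None)"
    if i: "i < l" and h: "h \<in> S i" for i h
  proof -
    have hh: "finite {h} \<and> {h} \<noteq> {} \<and> {h} \<subseteq> S i" using h by simp
    have a3: "\<forall>H. finite H \<and> H \<noteq> {} \<and> H \<subseteq> S i \<longrightarrow>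
        (\<exists>m. \<forall>F. finite F \<and> F \<noteq> {} \<and> F \<subseteq> {m..} \<longrightarrow>
              (\<exists>z. psum (add i) (y i) F = Some z \<and> z \<in> sigma (S i) (add i) H))"
      using aseq[OF i] unfolding adequate_seq_def by (elim conjE) assumption
    obtain M where M: "\<forall>K. finite K \<and> K \<noteq> {} \<and> K \<subseteq> {M..} \<longrightarrow>
              (\<exists>z. psum (add i) (y i) K = Some z \<and> z \<in> sigma (S i) (add i) {h})"
      using a3[rule_format, OF hh] by blast
    show ?thesis
    proof (rule exI[of _ M], intro allI impI)
      fix K assume K: "finite K \<and> K \<noteq> {} \<and> K \<subseteq> {M..}"
      obtain z where z: "psum (add i) (y i) K = Some z" "z \<in> sigma (S i) (add i) {h}"
        using M K by blast
      have "add i h z \<noteq> None" using z(2) unfolding sigma_def phi_def by simp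
      then show "\<exists>z. psum (add i) (y i) K = Some z \<and> add i h z \<noteq> None" using z(1) by blast
    qed
  qed
  define Gs where "Gs \<Gamma> F = (\<lambda>(t, n). t * m + n) ` (\<Gamma> \<times> F)" for \<Gamma> F :: "nat set"
  have Gs_fin: "finite (Gs \<Gamma> F)" if "finite \<Gamma>" "finite F" for \<Gamma> F
    unfolding Gs_def using that by simp
  have Gs_ne: "Gs \<Gamma> F \<noteq> {}" if "\<Gamma> \<noteq> {}" "F \<noteq> {}" for \<Gamma> F
    unfolding Gs_def using that by auto
  have Gs_Un: "Gs (\<Gamma> \<union> \<Gamma>') F = Gs \<Gamma> F \<union> Gs \<Gamma>' F" for \<Gamma> \<Gamma>' F
    unfolding Gs_def by (simp add: Sigma_Un_distrib1 image_Un)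
  have Gs_ins: "Gs \<Gamma> (insert n F) = Gs \<Gamma> {n} \<union> Gs \<Gamma> F" for \<Gamma> n F
  proof -
    have "insert n F = {n} \<union> F" by simp
    then show ?thesis unfolding Gs_def by (simp only: Sigma_Un_distrib2 image_Un)
  qed
  have Gs_disj1: "Gs \<Gamma> F \<inter> Gs \<Gamma>' F = {}" if "\<Gamma> \<inter> \<Gamma>' = {}" "F \<subseteq> {..<m}" for \<Gamma> \<Gamma>' F
  proof -
    have contra: "False" if "t \<in> \<Gamma>" "n \<in> F" "t' \<in> \<Gamma>'" "n' \<in> F" "t * m + n = t' * m + n'" for t n t' n'
    proof -
      have "n < m" "n' < m" using \<open>F \<subseteq> {..<m}\<close> that by auto
      then have "t = t'" using divmod_unique that(5) by blast
      then show False using \<open>\<Gamma> \<inter> \<Gamma>' = {}\<close> that by blast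
    qed
    show ?thesis
    proof (rule equals0I)
      fix k assume "k \<in> Gs \<Gamma> F \<inter> Gs \<Gamma>' F"
      then obtain t n t' n' where "t \<in> \<Gamma>" "n \<in> F" "t' \<in> \<Gamma>'" "n' \<in> F"
        "k = t * m + n" "k = t' * m + n'" unfolding Gs_def by auto
      then show False using contra by metis
    qed
  qed
  have Gs_disj2: "Gs \<Gamma> {n} \<inter> Gs \<Gamma> F = {}" if "n \<notin> F" "insert n F \<subseteq> {..<m}" for \<Gamma> n F
  proof -
    have contra: "False" if "t \<in> \<Gamma>" "t' \<in> \<Gamma>" "n' \<in> F" "t * m + n = t' * m + n'" for t t' n'
    proof -
      have "n < m" "n' < m" using \<open>insert n F \<subseteq> {..<m}\<close> that by auto
      then have "n = n'" using divmod_unique that(4) by blast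
      then show False using \<open>n \<notin> F\<close> that by blast
    qed
    show ?thesis
    proof (rule equals0I)
      fix k assume "k \<in> Gs \<Gamma> {n} \<inter> Gs \<Gamma> F"
      then obtain t t' n' where "t \<in> \<Gamma>" "t' \<in> \<Gamma>" "n' \<in> F"
        "k = t * m + n" "k = t' * m + n'" unfolding Gs_def by auto
      then show False using contra by metis
    qed
  qed
  have Gs_tail: "Gs \<Gamma> F \<subseteq> {M..}" if "\<Gamma> \<inter> {..<M} = {}" for \<Gamma> F M
  proof
    fix k assume "k \<in> Gs \<Gamma> F"
    then obtain t n where tn: "t \<in> \<Gamma>" "k = t * m + n" unfolding Gs_def by auto
    have tM: "M \<le> t" using tn(1) that by auto
    have "t * 1 \<le> t * m" using m1 by (rule mult_le_mono2)
    then have "M \<le> t * m" using tM by (metis le_trans mult_1_right)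
    then show "k \<in> {M..}" using tn(2) by simp
  qed
  define \<phi> where "\<phi> P \<Gamma> = (\<lambda>i. if i < l then the (psum (add i) (y i) (Gs \<Gamma> (P i))) else undefined)"
    for P :: "nat \<Rightarrow> nat set" and \<Gamma>
  define Pat where "Pat = PiE {..<l} (\<lambda>_. {F. F \<noteq> {} \<and> F \<subseteq> {..<m}})"
  obtain p where pd: "p \<in> deltaS FINs addF" and pid: "uf_plus FINs addF p p = p"
    using FIN_idem by blast
  have up: "ultrafilter_on FINs p" using delta_uf[OF pd] .
  have inC: "{\<Gamma> \<in> FINs. \<phi> P \<Gamma> \<in> C} \<in> p" if P: "P \<in> Pat" for P
  proof -
    have PF: "P i \<noteq> {}" "P i \<subseteq> {..<m}" "finite (P i)" if "i < l" for i
    proof -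
      show "P i \<noteq> {}" "P i \<subseteq> {..<m}" using P that unfolding Pat_def by auto
      then show "finite (P i)" using finite_subset by blast
    qed
    have psome: "\<exists>z. psum (add i) (y i) (Gs \<Gamma> (P i)) = Some z" if "i < l" "\<Gamma> \<in> FINs" for i \<Gamma>
      using pdef[OF that(1) Gs_fin Gs_ne] PF[OF that(1)] that(2) unfolding FINs_def by blast
    have \<phi>i: "psum (add i) (y i) (Gs \<Gamma> (P i)) = Some (\<phi> P \<Gamma> i)" if "i < l" "\<Gamma> \<in> FINs" for i \<Gamma>
      using psome[OF that] that(1) unfolding \<phi>_def by auto
    have \<phi>T: "\<phi> P \<Gamma> \<in> T" if G: "\<Gamma> \<in> FINs" for \<Gamma>
      unfolding T_def prod_carrier_def
    proof (rule PiE_I)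
      fix i assume "i \<in> {..<l}"
      then have i: "i < l" by simp
      show "\<phi> P \<Gamma> i \<in> S i" using psum_in_S[OF ps[OF i] yS[OF i] \<phi>i[OF i G]] .
    next
      fix i assume "i \<notin> {..<l}"
      then show "\<phi> P \<Gamma> i = undefined" unfolding \<phi>_def by simp
    qed
    have hom: "w \<in> FINs \<and> addT (\<phi> P \<Gamma>) (\<phi> P \<Gamma>') = Some (\<phi> P w)"
      if G: "\<Gamma> \<in> FINs" and G': "\<Gamma>' \<in> FINs" and w: "addF \<Gamma> \<Gamma>' = Some w" for \<Gamma> \<Gamma>' w
    proof -
      have dis: "\<Gamma> \<inter> \<Gamma>' = {}" and wU: "w = \<Gamma> \<union> \<Gamma>'" using w unfolding addF_def by (auto split: if_splits)
      have wF: "w \<in> FINs" using G G' wU unfolding FINs_def by auto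
      have each: "add i (\<phi> P \<Gamma> i) (\<phi> P \<Gamma>' i) = Some (\<phi> P w i)" if i: "i < l" for i
      proof -
        have fin: "finite (Gs \<Gamma> (P i))" "finite (Gs \<Gamma>' (P i))"
          using Gs_fin PF(3)[OF i] G G' unfolding FINs_def by auto
        have ne: "Gs \<Gamma> (P i) \<noteq> {}" "Gs \<Gamma>' (P i) \<noteq> {}"
          using Gs_ne PF(1)[OF i] G G' unfolding FINs_def by auto
        have dj: "Gs \<Gamma> (P i) \<inter> Gs \<Gamma>' (P i) = {}" using Gs_disj1[OF dis PF(2)[OF i]] .
        have "psum (add i) (y i) (Gs w (P i)) =
              comb (add i) (psum (add i) (y i) (Gs \<Gamma> (P i))) (psum (add i) (y i) (Gs \<Gamma>' (P i)))"
          unfolding wU Gs_Un by (rule psum_union[OF cs[OF i] yS[OF i] fin(1) ne(1) fin(2) ne(2) dj])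
        then show ?thesis using \<phi>i[OF i G] \<phi>i[OF i G'] \<phi>i[OF i wF] by (simp add: comb_def)
      qed
      have "addT (\<phi> P \<Gamma>) (\<phi> P \<Gamma>') = Some (\<phi> P w)"
      proof -
        have "\<forall>i\<in>{..<l}. add i (\<phi> P \<Gamma> i) (\<phi> P \<Gamma>' i) \<noteq> None" using each by simp
        moreover have "(\<lambda>i. if i \<in> {..<l} then the (add i (\<phi> P \<Gamma> i) (\<phi> P \<Gamma>' i)) else undefined) = \<phi> P w"
        proof
          fix i show "(if i \<in> {..<l} then the (add i (\<phi> P \<Gamma> i) (\<phi> P \<Gamma>' i)) else undefined) = \<phi> P w i"
            using each[of i] unfolding \<phi>_def by auto
        qed
        ultimately show ?thesis unfolding addT_def prod_add_def by simp
      qed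
      then show ?thesis using wF by blast
    qed
    have phiT: "{\<Gamma> \<in> FINs. \<phi> P \<Gamma> \<in> phi T addT x} \<in> p" if x: "x \<in> T" for x
    proof -
      have xi: "x i \<in> S i" if "i < l" for i using x that unfolding T_def prod_carrier_def by auto
      define Mf where "Mf i = (SOME M. \<forall>K. finite K \<and> K \<noteq> {} \<and> K \<subseteq> {M..} \<longrightarrow>
                  (\<exists>z. psum (add i) (y i) K = Some z \<and> add i (x i) z \<noteq> None))" for i
      have Mf: "\<forall>K. finite K \<and> K \<noteq> {} \<and> K \<subseteq> {Mf i..} \<longrightarrow>
                  (\<exists>z. psum (add i) (y i) K = Some z \<and> add i (x i) z \<noteq> None)" if i: "i < l" for i
        unfolding Mf_def by (rule someI_ex[OF tails[OF i xi[OF i]]])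
      define Mt where "Mt = Max (insert 0 (Mf ` {..<l}))"
      have MfMt: "Mf i \<le> Mt" if "i < l" for i unfolding Mt_def using that by (intro Max_ge) auto
      have sub: "{\<Gamma> \<in> FINs. \<Gamma> \<inter> {..<Mt} = {}} \<subseteq> {\<Gamma> \<in> FINs. \<phi> P \<Gamma> \<in> phi T addT x}"
      proof
        fix \<Gamma> assume "\<Gamma> \<in> {\<Gamma> \<in> FINs. \<Gamma> \<inter> {..<Mt} = {}}"
        then have G: "\<Gamma> \<in> FINs" and tl: "\<Gamma> \<inter> {..<Mt} = {}" by auto
        have "add i (x i) (\<phi> P \<Gamma> i) \<noteq> None" if i: "i < l" for i
        proof -
          have g: "Gs \<Gamma> (P i) \<subseteq> {Mt..}" by (rule Gs_tail[OF tl])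
          have "Gs \<Gamma> (P i) \<subseteq> {Mf i..}"
          proof
            fix k assume "k \<in> Gs \<Gamma> (P i)"
            then have "Mt \<le> k" using g by auto
            then show "k \<in> {Mf i..}" using MfMt[OF i] by simp
          qed
          moreover have "finite (Gs \<Gamma> (P i))" "Gs \<Gamma> (P i) \<noteq> {}"
            using Gs_fin Gs_ne PF[OF i] G unfolding FINs_def by auto
          ultimately obtain z where "psum (add i) (y i) (Gs \<Gamma> (P i)) = Some z" "add i (x i) z \<noteq> None"
            using Mf[OF i] by blast
          then show ?thesis using \<phi>i[OF i G] by simp
        qed
        then have "addT x (\<phi> P \<Gamma>) \<noteq> None" unfolding addT_def prod_add_def by auto
        then show "\<Gamma> \<in> {\<Gamma> \<in> FINs. \<phi> P \<Gamma> \<in> phi T addT x}" using G \<phi>T[OF G] unfolding phi_def by blast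
      qed
      show ?thesis by (rule uf_mono[OF up tail_in_p[OF pd] sub]) blast
    qed
    have ip: "C \<in> q" if "q \<in> deltaS T addT" "uf_plus T addT q q = q" for q
      using assms(5) that unfolding IP_star_def T_def addT_def by blast
    have pi: "{A. A \<subseteq> T \<and> {G \<in> FINs. \<phi> P G \<in> A} \<in> p} \<in> deltaS T addT \<and>
      uf_plus T addT {A. A \<subseteq> T \<and> {G \<in> FINs. \<phi> P G \<in> A} \<in> p} {A. A \<subseteq> T \<and> {G \<in> FINs. \<phi> P G \<in> A} \<in> p}
       = {A. A \<subseteq> T \<and> {G \<in> FINs. \<phi> P G \<in> A} \<in> p}"
      by (rule push_idem[OF pd pid \<phi>T hom phiT])
    have "C \<in> {A. A \<subseteq> T \<and> {G \<in> FINs. \<phi> P G \<in> A} \<in> p}"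
      using ip pi by blast
    then show ?thesis by simp
  qed
  have finPat: "finite Pat"
    unfolding Pat_def by (rule finite_PiE) auto
  define W where "W = FINs \<inter> \<Inter>((\<lambda>P. {\<Gamma> \<in> FINs. \<phi> P \<Gamma> \<in> C}) ` Pat)"
  have "W \<in> p" unfolding W_def
    by (rule uf_finite_Inter[OF up]) (use finPat inC in auto)
  then obtain \<Gamma> where GW: "\<Gamma> \<in> W" using uf_ne[OF up] by blast
  have GF: "\<Gamma> \<in> FINs" using GW unfolding W_def by blast
  have GC: "\<phi> P \<Gamma> \<in> C" if "P \<in> Pat" for P using GW that unfolding W_def by blast
  have Gfin: "finite \<Gamma>" "\<Gamma> \<noteq> {}" using GF unfolding FINs_def by auto
  define x where "x i n = the (psum (add i) (y i) (Gs \<Gamma> {n}))" for i n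
  have xdef: "psum (add i) (y i) (Gs \<Gamma> {n}) = Some (x i n)" if "i < l" for i n
    using pdef[OF that Gs_fin[OF Gfin(1)] Gs_ne[OF Gfin(2)]] unfolding x_def by auto
  have xS: "\<forall>n. x i n \<in> S i" if i: "i < l" for i
    using psum_in_S[OF ps[OF i] yS[OF i] xdef[OF i]] by blast
  have FSeq: "psum (add i) (x i) F = psum (add i) (y i) (Gs \<Gamma> F)"
    if i: "i < l" and F: "finite F" "F \<noteq> {}" "F \<subseteq> {..<m}" for i F
    using F
  proof (induction F rule: finite_ne_induct)
    case (singleton n)
    then show ?case using xdef[OF i] by (simp add: psum_singleton)
  next
    case (insert n F)
    have FF: "finite (Gs \<Gamma> F)" "Gs \<Gamma> F \<noteq> {}" "finite (Gs \<Gamma> {n})" "Gs \<Gamma> {n} \<noteq> {}"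
      using Gs_fin Gs_ne Gfin insert by auto
    have "psum (add i) (x i) (insert n F) = psum (add i) (x i) ({n} \<union> F)" by simp
    also have "\<dots> = comb (add i) (psum (add i) (x i) {n}) (psum (add i) (x i) F)"
      by (rule psum_union[OF cs[OF i] xS[OF i]]) (use insert in auto)
    also have "\<dots> = comb (add i) (psum (add i) (y i) (Gs \<Gamma> {n})) (psum (add i) (y i) (Gs \<Gamma> F))"
      using insert xdef[OF i] by (simp add: psum_singleton)
    also have "\<dots> = psum (add i) (y i) (Gs \<Gamma> {n} \<union> Gs \<Gamma> F)"
      by (rule psum_union[OF cs[OF i] yS[OF i] FF(3,4,1,2), symmetric])
        (rule Gs_disj2, use insert in auto)
    also have "\<dots> = psum (add i) (y i) (Gs \<Gamma> (insert n F))" using Gs_ins[of \<Gamma> n F] by (simp only:)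
    finally show ?case .
  qed
  show ?thesis
  proof (intro exI conjI allI impI)
    fix i assume i: "i < l"
    show "weak_product_subsystem (add i) (y i) m (x i)"
      unfolding weak_product_subsystem_def
    proof (intro exI conjI allI impI)
      fix n assume "n < m"
      show "finite (Gs \<Gamma> {n})" using Gs_fin Gfin by auto
      show "Gs \<Gamma> {n} \<noteq> {}" using Gs_ne Gfin by auto
      show "psum (add i) (y i) (Gs \<Gamma> {n}) = Some (x i n)" using xdef[OF i] .
    next
      fix n n' assume "n < m" "n' < m" "n \<noteq> n'"
      then show "Gs \<Gamma> {n} \<inter> Gs \<Gamma> {n'} = {}" by (intro Gs_disj2) auto
    qed
  next
    show "PiE {..<l} (\<lambda>i. FS (add i) (x i) m) \<subseteq> C"
    proof
      fix f assume f: "f \<in> PiE {..<l} (\<lambda>i. FS (add i) (x i) m)"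
      define Q where "Q i F = (F \<noteq> {} \<and> F \<subseteq> {..<m} \<and> psum (add i) (x i) F = Some (f i))" for i F
      have exQ: "\<exists>F. Q i F" if "i < l" for i
        using f that unfolding Q_def FS_def PiE_def Pi_def by auto
      define P where "P = restrict (\<lambda>i. SOME F. Q i F) {..<l}"
      have PQ: "Q i (P i)" if "i < l" for i
        unfolding P_def using someI_ex[OF exQ[OF that]] that by simp
      have PPat: "P \<in> Pat" unfolding Pat_def P_def
        using PQ unfolding Q_def P_def by (auto simp: restrict_PiE_iff)
      have "\<phi> P \<Gamma> = f"
      proof
        fix i
        show "\<phi> P \<Gamma> i = f i"
        proof (cases "i < l")
          case True
          have q: "P i \<noteq> {}" "P i \<subseteq> {..<m}" "psum (add i) (x i) (P i) = Some (f i)"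
            using PQ[OF True] unfolding Q_def by auto
          have "finite (P i)" using q(2) finite_subset by blast
          then have "psum (add i) (y i) (Gs \<Gamma> (P i)) = Some (f i)" using FSeq[OF True _ q(1,2)] q(3) by simp
          then show ?thesis unfolding \<phi>_def using True by simp
        next
          case False
          then show ?thesis using f unfolding \<phi>_def by (auto simp: PiE_def extensional_def)
        qed
      qed
      then show "f \<in> C" using GC[OF PPat] by simp
    qed
  qed
qed


end
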